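(* Fix one of the ground state sequences (A) or (B) and $m\in\mathbb Z$. For every $a\in\mathbb Z_{>0}$, $B_a|m\rangle=0$ in $\mathcal F_m$.
   Context: Setting: $\mathfrak g=\widehat{\mathfrak{sl}}_2$, $U_q(\mathfrak g)$ with coproduct $\Delta(e_i)=e_i\otimes1+t_i^{-1}\otimes e_i$, $\Delta(f_i)=f_i\otimes t_i+1\otimes f_i$, $\Delta(q^h)=q^h\otimes q^h$; $[n]=(q^n-q^{-n})/(q-q^{-1})$; $A\subset\mathbb Q(q)$ the ring of rational functions regular at $q=0$; $J=\{0,1,2\}$. $V_{\mathrm{aff}}$ has basis $z^av_j$ ($a\in\mathbb Z$, $j\in J$) with $\mathrm{wt}(z^av_j)=2(1-j)(\Lambda_1-\Lambda_0)+a\delta$, $e_1z^av_j=[3-j]z^av_{j-1}$, $f_1z^av_j=[j+1]z^av_{j+1}$, $e_0z^av_j=[j+1]z^{a+1}v_{j+1}$, $f_0z^av_j=[3-j]z^{a-1}v_{j-1}$ ($v_{-1}=v_3=0$); $z^b:z^av_j\mapsto z^{a+b}v_j$; $B_{\mathrm{aff}}=\{z^ab_j\}$, $G(z^ab_j)=z^av_j$. $N\subset V_{\mathrm{aff}}^{\otimes2}$ is the smallest subspace containing $v_0\otimes v_0$ stable under $U_q(\mathfrak g)$ and under $z\otimes z$, $z^{-1}\otimes z^{-1}$, $z\otimes1+1\otimes z$; $\bigwedge^nV_{\mathrm{aff}}=V_{\mathrm{aff}}^{\otimes n}/\sum_rV_{\mathrm{aff}}^{\otimes r}\otimes N\otimes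 V_{\mathrm{aff}}^{\otimes(n-r-2)}$ with lattice $L(\bigwedge^nV_{\mathrm{aff}})$ the image of the $A$-span of $G(c_1)\otimes\cdots\otimes G(c_n)$. Ground state sequences: (A) $b^\circ_m=zb_2$ ($m$ even), $b^\circ_m=b_0$ ($m$ odd); (B) $b^\circ_m=b_1$; $v^\circ_m=G(b^\circ_m)$. $\bar{\mathcal F}_m$ is the inductive limit of $\bigwedge^rV_{\mathrm{aff}}$ along $u\mapsto u\wedge v^\circ_{m+r}$, with image of $u$ written $u\wedge\overline{|m+r\rangle}$ and lattice $L(\bar{\mathcal F}_m)$ the $A$-span of images of the $L(\bigwedge^rV_{\mathrm{aff}})$; $\mathcal F_m=\bar{\mathcal F}_m/\bigcap_{n>0}q^nL(\bar{\mathcal F}_m)$ with $q$-adic topology (neighborhood basis $q^nL(\mathcal F_m)$), $|m\rangle$ the image of $\overline{|m\rangle}$. The boson $B_a$ ($a\neq0$) acts on $\mathcal F_m$ as $\sum_{s\ge0}1^{\otimes s}\otimes z^a\otimes1^{\otimes\infty}$, i.e. applying $z^a$ to one wedge factor at a time and summing over all positions (this sum converges $q$-adically); thus $B_a|m\rangle=\sum_{s\ge0}v^\circ_m\wedge\cdots\wedge v^\circ_{m+s-1}\wedge z^av^\circ_{m+s}\wedge|m+s+1\rangle$. *)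

theory Defs
  imports "HOL-Computational_Algebra.Polynomial" "HOL-Computational_Algebra.Fraction_Field"
begin

type_synonym K = "rat poly fract"

definition qq :: K where "qq = Fract [:0, 1:] 1"

definition qint :: "int \<Rightarrow> K" where
  "qint n = (qq powi n - qq powi (-n)) / (qq - inverse qq)"

definition ringA :: "K set" where
  "ringA = {x. \<exists>p r. poly r 0 \<noteq> 0 \<and> x = Fract p r}"

text \<open>The basis element z^a v_j of V_aff is encoded as the pair (a, j), j in J = {0,1,2}.\<close>
type_synonym bv = "int \<times> nat"

definition valid :: "bv \<Rightarrow> bool" where "valid x \<longleftrightarrow> snd x \<le> 2"

definition dlt :: "'b \<Rightarrow> 'b \<Rightarrow> K" where "dlt x = (\<lambda>y. if y = x then 1 else 0)"

inductive_set kspan :: "('b \<Rightarrow> K) set \<Rightarrow> ('b \<Rightarrow> K) set" for S where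
  kspan_zero: "(\<lambda>_. 0) \<in> kspan S"
| kspan_add: "f \<in> kspan S \<Longrightarrow> g \<in> S \<Longrightarrow> (\<lambda>x. f x + c * g x) \<in> kspan S"

inductive_set aspan :: "('b \<Rightarrow> K) set \<Rightarrow> ('b \<Rightarrow> K) set" for S where
  aspan_zero: "(\<lambda>_. 0) \<in> aspan S"
| aspan_add: "f \<in> aspan S \<Longrightarrow> g \<in> S \<Longrightarrow> c \<in> ringA \<Longrightarrow> (\<lambda>x. f x + c * g x) \<in> aspan S"

definition opE1 :: "bv \<Rightarrow> bv \<Rightarrow> K" where
  "opE1 x = (case x of (a, j) \<Rightarrow> (\<lambda>y. if 1 \<le> j \<and> j \<le> 2 \<and> y = (a, j - 1) then qint (3 - int j) else 0))"
definition opF1 :: "bv \<Rightarrow> bv \<Rightarrow> K" where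
  "opF1 x = (case x of (a, j) \<Rightarrow> (\<lambda>y. if j \<le> 1 \<and> y = (a, j + 1) then qint (int j + 1) else 0))"
definition opE0 :: "bv \<Rightarrow> bv \<Rightarrow> K" where
  "opE0 x = (case x of (a, j) \<Rightarrow> (\<lambda>y. if j \<le> 1 \<and> y = (a + 1, j + 1) then qint (int j + 1) else 0))"
definition opF0 :: "bv \<Rightarrow> bv \<Rightarrow> K" where
  "opF0 x = (case x of (a, j) \<Rightarrow> (\<lambda>y. if 1 \<le> j \<and> j \<le> 2 \<and> y = (a - 1, j - 1) then qint (3 - int j) else 0))"

definition opE :: "nat \<Rightarrow> bv \<Rightarrow> bv \<Rightarrow> K" where "opE i = (if i = 0 then opE0 else opE1)"
definition opF :: "nat \<Rightarrow> bv \<Rightarrow> bv \<Rightarrow> K" where "opF i = (if i = 0 then opF0 else opF1)"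

text \<open>Pairing <h, wt(z^a v_j)> for h = n0 h_0 + n1 h_1 + nd d, where
  wt(z^a v_j) = 2(1-j)(Lambda_1 - Lambda_0) + a delta.\<close>
definition hpair :: "int \<Rightarrow> int \<Rightarrow> int \<Rightarrow> bv \<Rightarrow> int" where
  "hpair n0 n1 nd x = (case x of (a, j) \<Rightarrow> (n1 - n0) * (2 * (1 - int j)) + nd * a)"

definition opQ :: "int \<Rightarrow> int \<Rightarrow> int \<Rightarrow> bv \<Rightarrow> bv \<Rightarrow> K" where
  "opQ n0 n1 nd x = (\<lambda>y. if y = x then qq powi hpair n0 n1 nd x else 0)"

definition opT :: "nat \<Rightarrow> bv \<Rightarrow> bv \<Rightarrow> K" where
  "opT i = (if i = 0 then opQ 1 0 0 else opQ 0 1 0)"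
definition opTinv :: "nat \<Rightarrow> bv \<Rightarrow> bv \<Rightarrow> K" where
  "opTinv i = (if i = 0 then opQ (-1) 0 0 else opQ 0 (-1) 0)"

definition opId :: "bv \<Rightarrow> bv \<Rightarrow> K" where "opId = dlt"

definition zsh :: "int \<Rightarrow> bv \<Rightarrow> bv" where "zsh b x = (fst x + b, snd x)"
definition opZ :: "int \<Rightarrow> bv \<Rightarrow> bv \<Rightarrow> K" where "opZ b x = dlt (zsh b x)"

definition app2 :: "(bv \<Rightarrow> bv \<Rightarrow> K) \<Rightarrow> (bv \<Rightarrow> bv \<Rightarrow> K) \<Rightarrow> (bv \<times> bv \<Rightarrow> K) \<Rightarrow> (bv \<times> bv \<Rightarrow> K)" where
  "app2 X Y f = (\<lambda>(y1, y2). \<Sum>p\<in>{p. f p \<noteq> 0}. f p * X (fst p) y1 * Y (snd p) y2)"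

definition vadd :: "('b \<Rightarrow> K) \<Rightarrow> ('b \<Rightarrow> K) \<Rightarrow> ('b \<Rightarrow> K)" where
  "vadd f g = (\<lambda>x. f x + g x)"

text \<open>N: smallest subspace containing v_0 (x) v_0, stable under U_q (acting via the coproduct,
  generators e_i, f_i, q^h) and under z(x)z, z^-1(x)z^-1, z(x)1 + 1(x)z.\<close>
inductive_set Nsp :: "(bv \<times> bv \<Rightarrow> K) set" where
  N_base: "dlt ((0, 0), (0, 0)) \<in> Nsp"
| N_add: "f \<in> Nsp \<Longrightarrow> g \<in> Nsp \<Longrightarrow> vadd f g \<in> Nsp"
| N_smul: "f \<in> Nsp \<Longrightarrow> (\<lambda>x. c * f x) \<in> Nsp"
| N_e: "f \<in> Nsp \<Longrightarrow> i \<le> 1 \<Longrightarrow> vadd (app2 (opE i) opId f) (app2 (opTinv i) (opE i) f) \<in> Nsp"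
| N_f: "f \<in> Nsp \<Longrightarrow> i \<le> 1 \<Longrightarrow> vadd (app2 (opF i) (opT i) f) (app2 opId (opF i) f) \<in> Nsp"
| N_q: "f \<in> Nsp \<Longrightarrow> app2 (opQ n0 n1 nd) (opQ n0 n1 nd) f \<in> Nsp"
| N_zz: "f \<in> Nsp \<Longrightarrow> app2 (opZ 1) (opZ 1) f \<in> Nsp"
| N_zizi: "f \<in> Nsp \<Longrightarrow> app2 (opZ (-1)) (opZ (-1)) f \<in> Nsp"
| N_zsum: "f \<in> Nsp \<Longrightarrow> vadd (app2 (opZ 1) opId f) (app2 opId (opZ 1) f) \<in> Nsp"

text \<open>Vectors of V_aff^(x)R: functions on basis lists of length R.
  ins u n w is (basis tensor u) (x) n (x) (basis tensor w).\<close>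
definition ins :: "bv list \<Rightarrow> (bv \<times> bv \<Rightarrow> K) \<Rightarrow> bv list \<Rightarrow> (bv list \<Rightarrow> K)" where
  "ins u n w = (\<lambda>y. if length y = length u + 2 + length w \<and> take (length u) y = u
       \<and> drop (length u + 2) y = w then n (y ! length u, y ! Suc (length u)) else 0)"

text \<open>Kernel of V^(x)R -> wedge^R: sum over r of V^(x)r (x) N (x) V^(x)(R-r-2)\<close>
definition NR :: "nat \<Rightarrow> (bv list \<Rightarrow> K) set" where
  "NR R = kspan {ins u n w | u n w. n \<in> Nsp \<and> list_all valid u \<and> list_all valid w
                                   \<and> length u + 2 + length w = R}"

text \<open>x in V^(x)R has image in q^n L(wedge^R)\<close>
definition in_qL_wedge :: "nat \<Rightarrow> nat \<Rightarrow> (bv list \<Rightarrow> K) \<Rightarrow> bool" where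
  "in_qL_wedge R n x \<longleftrightarrow> (\<exists>l k. l \<in> aspan {dlt u | u. length u = R \<and> list_all valid u}
       \<and> k \<in> NR R \<and> x = (\<lambda>y. qq ^ n * l y + k y))"

datatype gseq = SeqA | SeqB

definition gs :: "gseq \<Rightarrow> int \<Rightarrow> bv" where
  "gs g m = (case g of SeqA \<Rightarrow> (if even m then (1, 2) else (0, 0)) | SeqB \<Rightarrow> (0, 1))"

text \<open>Transition map wedge^R -> wedge^R' of the inductive system defining Fbar_m:
  u |-> u wedge v^o_{m+R} wedge ... wedge v^o_{m+R'-1} (on representatives in V^(x)R).\<close>
definition ext :: "gseq \<Rightarrow> int \<Rightarrow> nat \<Rightarrow> nat \<Rightarrow> (bv list \<Rightarrow> K) \<Rightarrow> (bv list \<Rightarrow> K)" where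
  "ext g m R R' w = (\<lambda>y. if length y = R' \<and> (\<forall>i\<in>{R..<R'}. y ! i = gs g (m + int i))
                          then w (take R y) else 0)"

text \<open>Elements of Fbar_m are represented by pairs (R, w), w in V^(x)R, standing for
  the image of w in wedge^R followed by the image in the inductive limit.\<close>
type_synonym fbar = "nat \<times> (bv list \<Rightarrow> K)"

definition fbar_add :: "gseq \<Rightarrow> int \<Rightarrow> fbar \<Rightarrow> fbar \<Rightarrow> fbar" where
  "fbar_add g m x y = (max (fst x) (fst y),
      vadd (ext g m (fst x) (max (fst x) (fst y)) (snd x)) (ext g m (fst y) (max (fst x) (fst y)) (snd y)))"

text \<open>Membership in q^n L(Fbar_m) (the A-span of the images of the q^n L(wedge^r)).\<close>
definition in_qL_fbar :: "gseq \<Rightarrow> int \<Rightarrow> nat \<Rightarrow> fbar \<Rightarrow> bool" where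
  "in_qL_fbar g m n x \<longleftrightarrow> (\<exists>R'\<ge>fst x. in_qL_wedge R' n (ext g m (fst x) R' (snd x)))"

text \<open>A sequence in Fbar_m whose image in F_m tends to 0 in the q-adic topology
  (neighbourhood basis q^n L(F_m); its preimage in Fbar_m is q^n L(Fbar_m)).\<close>
definition F_tendsto_zero :: "gseq \<Rightarrow> int \<Rightarrow> (nat \<Rightarrow> fbar) \<Rightarrow> bool" where
  "F_tendsto_zero g m X \<longleftrightarrow> (\<forall>n. \<exists>S0. \<forall>S\<ge>S0. in_qL_fbar g m n (X S))"

text \<open>s-th term: v^o_m wedge ... wedge v^o_{m+s-1} wedge z^a v^o_{m+s} wedge |m+s+1>\<close>
definition Bterm :: "gseq \<Rightarrow> int \<Rightarrow> int \<Rightarrow> nat \<Rightarrow> fbar" where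
  "Bterm g m a s = (Suc s,
     dlt (map (\<lambda>i. if i = s then zsh a (gs g (m + int i)) else gs g (m + int i)) [0..<Suc s]))"

primrec Bpartial :: "gseq \<Rightarrow> int \<Rightarrow> int \<Rightarrow> nat \<Rightarrow> fbar" where
  "Bpartial g m a 0 = (0, (\<lambda>_. 0))"
| "Bpartial g m a (Suc S) = fbar_add g m (Bpartial g m a S) (Bterm g m a S)"

end

theory Submission
  imports Defs
begin

lemma qq_nz: "qq \<noteq> 0"
  by (simp add: qq_def Zero_fract_def eq_fract)

lemma Fract_pow1: "Fract (a::rat poly) 1 ^ n = Fract (a ^ n) 1"
  by (induction n) (simp_all add: One_fract_def)

lemma Fract1_nz: "poly (a::rat poly) 0 \<noteq> 0 \<Longrightarrow> Fract a 1 \<noteq> 0"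
  by (auto simp add: Zero_fract_def eq_fract)

lemmas Kpolys = qq_def One_fract_def Fract_pow1 power2_eq_square numeral_eq_Suc

lemma nz1: "1 + qq^2 \<noteq> 0"
  unfolding qq_def One_fract_def by (simp add: Fract_pow1 Fract1_nz)
lemma nz2: "1 + qq^2 + qq^4 \<noteq> 0"
  unfolding qq_def One_fract_def by (simp add: Fract_pow1 Fract1_nz)
lemma nz3: "qq^2 - 1 \<noteq> 0"
  unfolding qq_def One_fract_def by (simp add: Fract_pow1 Fract1_nz)
lemma qq_ninv: "qq - inverse qq \<noteq> 0"
proof -
  have e: "qq - inverse qq = (qq*qq - 1)/qq" using qq_nz by (simp add: field_simps)
  have "qq*qq - 1 \<noteq> 0" using nz3 by (simp add: power2_eq_square)
  then show ?thesis unfolding e using qq_nz by simp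
qed
lemma qq_ninv': "qq \<noteq> inverse qq" using qq_ninv by simp
lemma qint2: "qint 2 = qq + inverse qq"
  unfolding qint_def using qq_ninv qq_ninv' qq_nz
  by (simp add: field_simps power_int_def power2_eq_square) 
lemma qint1: "qint 1 = 1"
  using qq_ninv unfolding qint_def by simp

definition vec :: "(K \<times> 'b) list \<Rightarrow> 'b \<Rightarrow> K" where
  "vec xs y = sum_list (map (\<lambda>(c,p). if p = y then c else 0) xs)"

lemma vec_Nil[simp]: "vec [] y = 0" by (simp add: vec_def)
lemma vec_Cons[simp]: "vec ((c,p)#xs) y = (if p = y then c else 0) + vec xs y"
  by (simp add: vec_def)
lemma vec_append: "vec (xs @ ys) y = vec xs y + vec ys y"
  by (simp add: vec_def)
lemma vec_supp: "{y. vec xs y \<noteq> 0} \<subseteq> set (map snd xs)"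
proof (induction xs)
  case Nil then show ?case by simp
next
  case (Cons a xs) then show ?case by (cases a) (auto split: if_splits)
qed
lemma vec_fin: "finite {y. vec xs y \<noteq> 0}"
  by (rule finite_subset[OF vec_supp]) simp

lemma vec_eqI:
  assumes "\<forall>k \<in> set (map snd xs) \<union> set (map snd ys). vec xs k = vec ys k"
  shows "vec xs = vec ys"
proof
  fix k
  show "vec xs k = vec ys k"
  proof (cases "k \<in> set (map snd xs) \<union> set (map snd ys)")
    case True then show ?thesis using assms by blast
  next
    case False
    have "vec xs k = 0"
    proof (rule ccontr)
      assume "vec xs k \<noteq> 0"
      then have "k \<in> {y. vec xs y \<noteq> 0}" by simp
      then show False using vec_supp[of xs] False by (meson UnCI subsetD)
    qed
    moreover have "vec ys k = 0"
    proof (rule ccontr)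
      assume "vec ys k \<noteq> 0"
      then have "k \<in> {y. vec ys y \<noteq> 0}" by simp
      then show False using vec_supp[of ys] False by (meson UnCI subsetD)
    qed
    ultimately show ?thesis by simp
  qed
qed

lemma dlt_vec: "dlt p = vec [(1,p)]"
  by (rule ext) (simp add: dlt_def)

lemma vadd_vec: "vadd (vec xs) (vec ys) = vec (xs @ ys)"
  by (rule ext) (simp add: vadd_def vec_append)

definition smull :: "K \<Rightarrow> (K \<times> 'b) list \<Rightarrow> (K \<times> 'b) list" where
  "smull c xs = map (\<lambda>(a,p). (c*a,p)) xs"

lemma smul_vec: "(\<lambda>y. c * vec xs y) = vec (smull c xs)"
proof (rule ext)
  fix y show "c * vec xs y = vec (smull c xs) y"
    by (induction xs) (auto simp: smull_def distrib_left)
qed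

definition fs :: "('b \<Rightarrow> K) \<Rightarrow> bool" where "fs f \<longleftrightarrow> finite {p. f p \<noteq> 0}"

lemma app2_sum:
  assumes "finite S" "{p. f p \<noteq> 0} \<subseteq> S"
  shows "app2 X Y f (y1,y2) = (\<Sum>p\<in>S. f p * X (fst p) y1 * Y (snd p) y2)"
proof -
  have "app2 X Y f (y1,y2) = (\<Sum>p\<in>{p. f p \<noteq> 0}. f p * X (fst p) y1 * Y (snd p) y2)"
    by (simp add: app2_def)
  also have "\<dots> = (\<Sum>p\<in>S. f p * X (fst p) y1 * Y (snd p) y2)"
    by (rule sum.mono_neutral_left[OF assms]) simp
  finally show ?thesis .
qed

lemma app2_add:
  assumes "fs f" "fs g"
  shows "app2 X Y (vadd f g) = vadd (app2 X Y f) (app2 X Y g)"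
proof (rule ext)
  fix yy :: "bv \<times> bv"
  obtain y1 y2 where yy: "yy = (y1,y2)" by (cases yy) simp
  let ?S = "{p. f p \<noteq> 0} \<union> {p. g p \<noteq> 0}"
  have fin: "finite ?S" using assms by (simp add: fs_def)
  have s1: "{p. vadd f g p \<noteq> 0} \<subseteq> ?S" by (auto simp: vadd_def)
  have a: "app2 X Y (vadd f g) (y1,y2) = (\<Sum>p\<in>?S. vadd f g p * X (fst p) y1 * Y (snd p) y2)"
    by (rule app2_sum[OF fin s1])
  have b: "app2 X Y f (y1,y2) = (\<Sum>p\<in>?S. f p * X (fst p) y1 * Y (snd p) y2)"
    by (rule app2_sum[OF fin]) blast
  have c: "app2 X Y g (y1,y2) = (\<Sum>p\<in>?S. g p * X (fst p) y1 * Y (snd p) y2)"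
    by (rule app2_sum[OF fin]) blast
  show "app2 X Y (vadd f g) yy = vadd (app2 X Y f) (app2 X Y g) yy"
    unfolding yy a vadd_def[of "app2 X Y f"] b c by (simp add: vadd_def sum.distrib distrib_right)
qed

lemma app2_smul:
  assumes "fs f"
  shows "app2 X Y (\<lambda>p. c * f p) = (\<lambda>y. c * app2 X Y f y)"
proof (rule ext)
  fix yy :: "bv \<times> bv"
  obtain y1 y2 where yy: "yy = (y1,y2)" by (cases yy) simp
  let ?S = "{p. f p \<noteq> 0}"
  have fin: "finite ?S" using assms by (simp add: fs_def)
  have a: "app2 X Y (\<lambda>p. c * f p) (y1,y2) = (\<Sum>p\<in>?S. c * f p * X (fst p) y1 * Y (snd p) y2)"
    by (rule app2_sum[OF fin]) auto
  have b: "app2 X Y f (y1,y2) = (\<Sum>p\<in>?S. f p * X (fst p) y1 * Y (snd p) y2)"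
    by (rule app2_sum[OF fin]) blast
  show "app2 X Y (\<lambda>p. c * f p) yy = c * app2 X Y f yy"
    unfolding yy a b by (simp add: sum_distrib_left mult.assoc)
qed

definition tens :: "(K \<times> 'a) list \<Rightarrow> (K \<times> 'b) list \<Rightarrow> (K \<times> ('a \<times> 'b)) list" where
  "tens xs ys = concat (map (\<lambda>(a,x). map (\<lambda>(b,y). (a*b,(x,y))) ys) xs)"

lemma tens_vec: "vec (tens xs ys) (y1,y2) = vec xs y1 * vec ys y2"
proof (induction xs)
  case Nil then show ?case by (simp add: tens_def)
next
  case (Cons a xs)
  have h: "vec (map (\<lambda>(b,y). (c*b,(x,y))) ys) (y1,y2) = (if x = y1 then c else 0) * vec ys y2" for c x
    by (induction ys) (auto simp: distrib_left)
  show ?case using Cons by (cases a) (simp add: tens_def vec_append h distrib_right)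
qed

definition app2l :: "('a \<Rightarrow> (K\<times>'a) list) \<Rightarrow> ('b \<Rightarrow> (K\<times>'b) list) \<Rightarrow> (K \<times> ('a\<times>'b)) list \<Rightarrow> (K \<times> ('a\<times>'b)) list" where
  "app2l Xl Yl xs = concat (map (\<lambda>(c,p). smull c (tens (Xl (fst p)) (Yl (snd p)))) xs)"

lemma fs_vec: "fs (vec xs)" by (simp add: fs_def vec_fin)

lemma app2_single: "app2 X Y (vec [(c,p)]) = (\<lambda>(y1,y2). c * X (fst p) y1 * Y (snd p) y2)"
proof (rule ext, clarify)
  fix y1 y2
  show "app2 X Y (vec [(c,p)]) (y1,y2) = c * X (fst p) y1 * Y (snd p) y2"
    by (subst app2_sum[of "{p}"]) auto
qed

lemma vec_Cons': "vec (x#xs) = vadd (vec [x]) (vec xs)"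
  by (cases x) (auto simp: vadd_def)

lemma app2_vec:
  assumes XX: "\<And>x. X x = vec (Xl x)" and YY: "\<And>y. Y y = vec (Yl y)"
  shows "app2 X Y (vec xs) = vec (app2l Xl Yl xs)"
proof (induction xs)
  case Nil
  have n1: "app2 X Y (\<lambda>_. 0) = (\<lambda>_. 0)" by (rule ext, clarify) (simp add: app2_def)
  have n2: "vec [] = (\<lambda>_. 0)" by (rule ext) simp
  have n3: "app2l Xl Yl [] = []" by (simp add: app2l_def)
  show ?case by (simp only: n1 n2 n3)
next
  case (Cons a xs)
  obtain c p where a: "a = (c,p)" by (cases a) simp
  have e2: "app2 X Y (vec (a#xs)) = vadd (app2 X Y (vec [a])) (app2 X Y (vec xs))"
    by (subst vec_Cons') (rule app2_add[OF fs_vec fs_vec])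
  have e3: "app2 X Y (vec [a]) = vec (smull c (tens (Xl (fst p)) (Yl (snd p))))"
  proof (rule ext)
    fix yy :: "bv \<times> bv" obtain y1 y2 where yy: "yy = (y1,y2)" by (cases yy) simp
    have "app2 X Y (vec [a]) (y1,y2) = c * X (fst p) y1 * Y (snd p) y2"
      unfolding a app2_single by simp
    also have "\<dots> = c * (vec (Xl (fst p)) y1 * vec (Yl (snd p)) y2)"
      by (simp only: XX YY mult.assoc)
    also have "\<dots> = c * vec (tens (Xl (fst p)) (Yl (snd p))) (y1,y2)"
      by (simp only: tens_vec)
    also have "\<dots> = vec (smull c (tens (Xl (fst p)) (Yl (snd p)))) (y1,y2)"
      by (simp only: smul_vec[symmetric])
    finally show "app2 X Y (vec [a]) yy = vec (smull c (tens (Xl (fst p)) (Yl (snd p)))) yy" unfolding yy .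
  qed
  have e4: "app2l Xl Yl (a#xs) = smull c (tens (Xl (fst p)) (Yl (snd p))) @ app2l Xl Yl xs"
    by (simp add: app2l_def a)
  show ?case by (simp only: e2 e3 Cons.IH e4 vadd_vec)
qed

definition E1l :: "bv \<Rightarrow> (K \<times> bv) list" where
  "E1l x = (case x of (a,j) \<Rightarrow> if 1 \<le> j \<and> j \<le> 2 then [(qint (3 - int j), (a, j - 1))] else [])"
definition F1l :: "bv \<Rightarrow> (K \<times> bv) list" where
  "F1l x = (case x of (a,j) \<Rightarrow> if j \<le> 1 then [(qint (int j + 1), (a, j + 1))] else [])"
definition E0l :: "bv \<Rightarrow> (K \<times> bv) list" where
  "E0l x = (case x of (a,j) \<Rightarrow> if j \<le> 1 then [(qint (int j + 1), (a + 1, j + 1))] else [])"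
definition F0l :: "bv \<Rightarrow> (K \<times> bv) list" where
  "F0l x = (case x of (a,j) \<Rightarrow> if 1 \<le> j \<and> j \<le> 2 then [(qint (3 - int j), (a - 1, j - 1))] else [])"
definition Ql :: "int \<Rightarrow> int \<Rightarrow> int \<Rightarrow> bv \<Rightarrow> (K \<times> bv) list" where
  "Ql n0 n1 nd x = [(qq powi hpair n0 n1 nd x, x)]"
definition Idl :: "bv \<Rightarrow> (K \<times> bv) list" where "Idl x = [(1, x)]"
definition Zl :: "int \<Rightarrow> bv \<Rightarrow> (K \<times> bv) list" where "Zl b x = [(1, zsh b x)]"
definition El :: "nat \<Rightarrow> bv \<Rightarrow> (K \<times> bv) list" where "El i = (if i = 0 then E0l else E1l)"
definition Fl :: "nat \<Rightarrow> bv \<Rightarrow> (K \<times> bv) list" where "Fl i = (if i = 0 then F0l else F1l)"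
definition Tl :: "nat \<Rightarrow> bv \<Rightarrow> (K \<times> bv) list" where "Tl i = (if i = 0 then Ql 1 0 0 else Ql 0 1 0)"
definition Tinvl :: "nat \<Rightarrow> bv \<Rightarrow> (K \<times> bv) list" where "Tinvl i = (if i = 0 then Ql (-1) 0 0 else Ql 0 (-1) 0)"

lemma opE1_l: "opE1 x = vec (E1l x)"
  by (cases x) (auto simp: opE1_def E1l_def)
lemma opF1_l: "opF1 x = vec (F1l x)"
  by (cases x) (auto simp: opF1_def F1l_def)
lemma opE0_l: "opE0 x = vec (E0l x)"
  by (cases x) (auto simp: opE0_def E0l_def)
lemma opF0_l: "opF0 x = vec (F0l x)"
  by (cases x) (auto simp: opF0_def F0l_def)
lemma opQ_l: "opQ n0 n1 nd x = vec (Ql n0 n1 nd x)"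
  by (rule ext) (auto simp: opQ_def Ql_def)
lemma opId_l: "opId x = vec (Idl x)"
  by (rule ext) (auto simp: opId_def Idl_def dlt_def)
lemma opZ_l: "opZ b x = vec (Zl b x)"
  by (rule ext) (auto simp: opZ_def Zl_def dlt_def)
lemma opE_l: "opE i x = vec (El i x)"
  by (simp add: opE_def El_def opE0_l opE1_l)
lemma opF_l: "opF i x = vec (Fl i x)"
  by (simp add: opF_def Fl_def opF0_l opF1_l)
lemma opT_l: "opT i x = vec (Tl i x)"
  by (simp add: opT_def Tl_def opQ_l)
lemma opTinv_l: "opTinv i x = vec (Tinvl i x)"
  by (simp add: opTinv_def Tinvl_def opQ_l)

lemma Nv_base: "vec [(1,((0,0),(0,0)))] \<in> Nsp"
  using N_base by (simp add: dlt_vec)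
lemma Nv_e: "vec xs \<in> Nsp \<Longrightarrow> i \<le> 1 \<Longrightarrow> vec (app2l (El i) Idl xs @ app2l (Tinvl i) (El i) xs) \<in> Nsp"
  using N_e[of "vec xs" i] by (simp add: app2_vec opE_l opId_l opTinv_l vadd_vec)
lemma Nv_f: "vec xs \<in> Nsp \<Longrightarrow> i \<le> 1 \<Longrightarrow> vec (app2l (Fl i) (Tl i) xs @ app2l Idl (Fl i) xs) \<in> Nsp"
  using N_f[of "vec xs" i] by (simp add: app2_vec opF_l opId_l opT_l vadd_vec)
lemma Nv_zz: "vec xs \<in> Nsp \<Longrightarrow> vec (app2l (Zl 1) (Zl 1) xs) \<in> Nsp"
  using N_zz[of "vec xs"] by (simp add: app2_vec opZ_l)
lemma Nv_zizi: "vec xs \<in> Nsp \<Longrightarrow> vec (app2l (Zl (-1)) (Zl (-1)) xs) \<in> Nsp"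
  using N_zizi[of "vec xs"] by (simp add: app2_vec opZ_l)
lemma Nv_zsum: "vec xs \<in> Nsp \<Longrightarrow> vec (app2l (Zl 1) Idl xs @ app2l Idl (Zl 1) xs) \<in> Nsp"
  using N_zsum[of "vec xs"] by (simp add: app2_vec opZ_l opId_l vadd_vec)
lemma Nv_smul: "vec xs \<in> Nsp \<Longrightarrow> vec (smull c xs) \<in> Nsp"
  using N_smul[of "vec xs" c] by (simp add: smul_vec)

lemma cancelK: "a \<noteq> 0 \<Longrightarrow> b \<noteq> 0 \<Longrightarrow> b / a * (t * a / b) = (t::K)"
  by (simp add: field_simps)

lemmas evl = app2l_def tens_def smull_def El_def Fl_def Tl_def Tinvl_def E0l_def E1l_def F0l_def F1l_def
  Ql_def Idl_def Zl_def hpair_def zsh_def qint1 qint2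


lemma W1: "vec [((1),((0,0),(0,1))), ((qq^2),((0,1),(0,0)))] \<in> Nsp"
proof -
  have h: "vec (app2l (Fl 1) (Tl 1) [(1,((0,0),(0,0)))] @ app2l Idl (Fl 1) [(1,((0,0),(0,0)))]) \<in> Nsp"
    by (intro Nv_e Nv_f Nv_zz Nv_zizi Nv_zsum Nv_base; simp)
  have e: "vec (app2l (Fl 1) (Tl 1) [(1,((0,0),(0,0)))] @ app2l Idl (Fl 1) [(1,((0,0),(0,0)))]) = (vec [((1),((0,0),(0,1))), ((qq^2),((0,1),(0,0)))] :: bv \<times> bv \<Rightarrow> K)"
    by (rule vec_eqI, simp add: evl power_int_minus field_simps qq_nz, ((intro conjI)?; algebra)?)
  show ?thesis using h unfolding e .
qed

lemma B0: "vec [(1,((0,0),(0,1))), (qq^2,((0,1),(0,0)))] \<in> Nsp"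
proof -
  have s: "vec (smull (1) [((1),((0,0),(0,1))), ((qq^2),((0,1),(0,0)))]) \<in> Nsp" by (rule Nv_smul[OF W1])
  have e: "vec (smull (1) [((1),((0,0),(0,1))), ((qq^2),((0,1),(0,0)))]) = (vec [(1,((0,0),(0,1))), (qq^2,((0,1),(0,0)))] :: bv \<times> bv \<Rightarrow> K)"
    by (rule vec_eqI, simp add: smull_def field_simps qq_nz, ((intro conjI)?; algebra)?)
  show ?thesis using s unfolding e .
qed

lemma W2: "vec [((1),((0,0),(1,1))), ((qq^2),((0,1),(1,0))), ((1),((1,0),(0,1))), ((qq^2),((1,1),(0,0)))] \<in> Nsp"
proof -
  have h: "vec (app2l (Zl 1) Idl (app2l (Fl 1) (Tl 1) [(1,((0,0),(0,0)))] @ app2l Idl (Fl 1) [(1,((0,0),(0,0)))]) @ app2l Idl (Zl 1) (app2l (Fl 1) (Tl 1) [(1,((0,0),(0,0)))] @ app2l Idl (Fl 1) [(1,((0,0),(0,0)))])) \<in> Nsp"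
    by (intro Nv_e Nv_f Nv_zz Nv_zizi Nv_zsum Nv_base; simp)
  have e: "vec (app2l (Zl 1) Idl (app2l (Fl 1) (Tl 1) [(1,((0,0),(0,0)))] @ app2l Idl (Fl 1) [(1,((0,0),(0,0)))]) @ app2l Idl (Zl 1) (app2l (Fl 1) (Tl 1) [(1,((0,0),(0,0)))] @ app2l Idl (Fl 1) [(1,((0,0),(0,0)))])) = (vec [((1),((0,0),(1,1))), ((qq^2),((0,1),(1,0))), ((1),((1,0),(0,1))), ((qq^2),((1,1),(0,0)))] :: bv \<times> bv \<Rightarrow> K)"
    by (rule vec_eqI, simp add: evl power_int_minus field_simps qq_nz, ((intro conjI)?; algebra)?)
  show ?thesis using h unfolding e .
qed

lemma W3: "vec [((qq^2),((0,0),(1,1))), ((1),((1,1),(0,0)))] \<in> Nsp"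
proof -
  have h: "vec (app2l (El 0) Idl [(1,((0,0),(0,0)))] @ app2l (Tinvl 0) (El 0) [(1,((0,0),(0,0)))]) \<in> Nsp"
    by (intro Nv_e Nv_f Nv_zz Nv_zizi Nv_zsum Nv_base; simp)
  have e: "vec (app2l (El 0) Idl [(1,((0,0),(0,0)))] @ app2l (Tinvl 0) (El 0) [(1,((0,0),(0,0)))]) = (vec [((qq^2),((0,0),(1,1))), ((1),((1,1),(0,0)))] :: bv \<times> bv \<Rightarrow> K)"
    by (rule vec_eqI, simp add: evl power_int_minus field_simps qq_nz, ((intro conjI)?; algebra)?)
  show ?thesis using h unfolding e .
qed

lemma B1: "vec [(1,((1,0),(0,1))), (1 - qq^4,((0,0),(1,1))), (qq^2,((0,1),(1,0)))] \<in> Nsp"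
proof -
  have s: "vec (smull (1) [((1),((0,0),(1,1))), ((qq^2),((0,1),(1,0))), ((1),((1,0),(0,1))), ((qq^2),((1,1),(0,0)))] @ smull (- (qq^2)) [((qq^2),((0,0),(1,1))), ((1),((1,1),(0,0)))]) \<in> Nsp"
    using N_add[OF Nv_smul[OF W2] Nv_smul[OF W3]] by (simp add: vadd_vec)
  have e: "vec (smull (1) [((1),((0,0),(1,1))), ((qq^2),((0,1),(1,0))), ((1),((1,0),(0,1))), ((qq^2),((1,1),(0,0)))] @ smull (- (qq^2)) [((qq^2),((0,0),(1,1))), ((1),((1,1),(0,0)))]) = (vec [(1,((1,0),(0,1))), (1 - qq^4,((0,0),(1,1))), (qq^2,((0,1),(1,0)))] :: bv \<times> bv \<Rightarrow> K)"
    by (rule vec_eqI, simp add: smull_def field_simps qq_nz, ((intro conjI)?; algebra)?)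
  show ?thesis using s unfolding e .
qed

lemma W4: "vec [((qq + qq^3),((0,0),(1,2))), ((qq^2),((0,1),(1,1))), ((1),((1,1),(0,1))), ((qq + qq^3),((1,2),(0,0)))] \<in> Nsp"
proof -
  have h: "vec (app2l (Fl 1) (Tl 1) (app2l (El 0) Idl [(1,((0,0),(0,0)))] @ app2l (Tinvl 0) (El 0) [(1,((0,0),(0,0)))]) @ app2l Idl (Fl 1) (app2l (El 0) Idl [(1,((0,0),(0,0)))] @ app2l (Tinvl 0) (El 0) [(1,((0,0),(0,0)))])) \<in> Nsp"
    by (intro Nv_e Nv_f Nv_zz Nv_zizi Nv_zsum Nv_base; simp)
  have e: "vec (app2l (Fl 1) (Tl 1) (app2l (El 0) Idl [(1,((0,0),(0,0)))] @ app2l (Tinvl 0) (El 0) [(1,((0,0),(0,0)))]) @ app2l Idl (Fl 1) (app2l (El 0) Idl [(1,((0,0),(0,0)))] @ app2l (Tinvl 0) (El 0) [(1,((0,0),(0,0)))])) = (vec [((qq + qq^3),((0,0),(1,2))), ((qq^2),((0,1),(1,1))), ((1),((1,1),(0,1))), ((qq + qq^3),((1,2),(0,0)))] :: bv \<times> bv \<Rightarrow> K)"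
    by (rule vec_eqI, simp add: evl power_int_minus field_simps qq_nz, ((intro conjI)?; algebra)?)
  show ?thesis using h unfolding e .
qed

lemma B2: "vec [(1,((1,1),(0,1))), (qq + qq^3,((0,0),(1,2))), (qq^2,((0,1),(1,1))), (qq + qq^3,((1,2),(0,0)))] \<in> Nsp"
proof -
  have s: "vec (smull (1) [((qq + qq^3),((0,0),(1,2))), ((qq^2),((0,1),(1,1))), ((1),((1,1),(0,1))), ((qq + qq^3),((1,2),(0,0)))]) \<in> Nsp" by (rule Nv_smul[OF W4])
  have e: "vec (smull (1) [((qq + qq^3),((0,0),(1,2))), ((qq^2),((0,1),(1,1))), ((1),((1,1),(0,1))), ((qq + qq^3),((1,2),(0,0)))]) = (vec [(1,((1,1),(0,1))), (qq + qq^3,((0,0),(1,2))), (qq^2,((0,1),(1,1))), (qq + qq^3,((1,2),(0,0)))] :: bv \<times> bv \<Rightarrow> K)"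
    by (rule vec_eqI, simp add: smull_def field_simps qq_nz, ((intro conjI)?; algebra)?)
  show ?thesis using s unfolding e .
qed

lemma W5: "vec [((qq^2) * ((1 + qq^2) * (1 + qq^2 + qq^4)) / qq^3,((0,1),(1,2))), ((1) * ((1 + qq^2) * (1 + qq^2 + qq^4)) / qq^3,((1,2),(0,1)))] \<in> Nsp"
proof -
  have h: "vec (app2l (Zl (-1)) (Zl (-1)) (app2l (El 0) Idl (app2l (El 0) Idl (app2l (El 0) Idl [(1,((0,0),(0,0)))] @ app2l (Tinvl 0) (El 0) [(1,((0,0),(0,0)))]) @ app2l (Tinvl 0) (El 0) (app2l (El 0) Idl [(1,((0,0),(0,0)))] @ app2l (Tinvl 0) (El 0) [(1,((0,0),(0,0)))])) @ app2l (Tinvl 0) (El 0) (app2l (El 0) Idl (app2l (El 0) Idl [(1,((0,0),(0,0)))] @ app2l (Tinvl 0) (El 0) [(1,((0,0),(0,0)))]) @ app2l (Tinvl 0) (El 0) (app2l (El 0) Idl [(1,((0,0),(0,0)))] @ app2l (Tinvl 0) (El 0) [(1,((0,0),(0,0)))])))) \<in> Nsp"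
    by (intro Nv_e Nv_f Nv_zz Nv_zizi Nv_zsum Nv_base; simp)
  have e: "vec (app2l (Zl (-1)) (Zl (-1)) (app2l (El 0) Idl (app2l (El 0) Idl (app2l (El 0) Idl [(1,((0,0),(0,0)))] @ app2l (Tinvl 0) (El 0) [(1,((0,0),(0,0)))]) @ app2l (Tinvl 0) (El 0) (app2l (El 0) Idl [(1,((0,0),(0,0)))] @ app2l (Tinvl 0) (El 0) [(1,((0,0),(0,0)))])) @ app2l (Tinvl 0) (El 0) (app2l (El 0) Idl (app2l (El 0) Idl [(1,((0,0),(0,0)))] @ app2l (Tinvl 0) (El 0) [(1,((0,0),(0,0)))]) @ app2l (Tinvl 0) (El 0) (app2l (El 0) Idl [(1,((0,0),(0,0)))] @ app2l (Tinvl 0) (El 0) [(1,((0,0),(0,0)))])))) = (vec [((qq^2) * ((1 + qq^2) * (1 + qq^2 + qq^4)) / qq^3,((0,1),(1,2))), ((1) * ((1 + qq^2) * (1 + qq^2 + qq^4)) / qq^3,((1,2),(0,1)))] :: bv \<times> bv \<Rightarrow> K)"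
    by (rule vec_eqI, simp add: evl power_int_minus field_simps qq_nz, ((intro conjI)?; algebra)?)
  show ?thesis using h unfolding e .
qed

lemma B3: "vec [(1,((1,2),(0,1))), (qq^2,((0,1),(1,2)))] \<in> Nsp"
proof -
  have s: "vec (smull (qq^3 / ((1 + qq^2) * (1 + qq^2 + qq^4))) [((qq^2) * ((1 + qq^2) * (1 + qq^2 + qq^4)) / qq^3,((0,1),(1,2))), ((1) * ((1 + qq^2) * (1 + qq^2 + qq^4)) / qq^3,((1,2),(0,1)))]) \<in> Nsp" by (rule Nv_smul[OF W5])
  have c0: "qq^3 / ((1 + qq^2) * (1 + qq^2 + qq^4)) * ((1) * ((1 + qq^2) * (1 + qq^2 + qq^4)) / qq^3) = 1" by (rule cancelK) (simp_all add: nz1 nz2 qq_nz)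
  have c1: "qq^3 / ((1 + qq^2) * (1 + qq^2 + qq^4)) * ((qq^2) * ((1 + qq^2) * (1 + qq^2 + qq^4)) / qq^3) = qq^2" by (rule cancelK) (simp_all add: nz1 nz2 qq_nz)
  have e: "vec (smull (qq^3 / ((1 + qq^2) * (1 + qq^2 + qq^4))) [((qq^2) * ((1 + qq^2) * (1 + qq^2 + qq^4)) / qq^3,((0,1),(1,2))), ((1) * ((1 + qq^2) * (1 + qq^2 + qq^4)) / qq^3,((1,2),(0,1)))]) = (vec [(1,((1,2),(0,1))), (qq^2,((0,1),(1,2)))] :: bv \<times> bv \<Rightarrow> K)"
    by (simp only: smull_def list.map prod.case c0 c1; (rule vec_eqI, simp)?)
  show ?thesis using s unfolding e .
qed

lemma W6: "vec [((1),((0,0),(1,0))), ((1),((1,0),(0,0)))] \<in> Nsp"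
proof -
  have h: "vec (app2l (Zl 1) Idl [(1,((0,0),(0,0)))] @ app2l Idl (Zl 1) [(1,((0,0),(0,0)))]) \<in> Nsp"
    by (intro Nv_e Nv_f Nv_zz Nv_zizi Nv_zsum Nv_base; simp)
  have e: "vec (app2l (Zl 1) Idl [(1,((0,0),(0,0)))] @ app2l Idl (Zl 1) [(1,((0,0),(0,0)))]) = (vec [((1),((0,0),(1,0))), ((1),((1,0),(0,0)))] :: bv \<times> bv \<Rightarrow> K)"
    by (rule vec_eqI, simp add: evl power_int_minus field_simps qq_nz, ((intro conjI)?; algebra)?)
  show ?thesis using h unfolding e .
qed

lemma A1: "vec [(1,((1,0),(0,0))), (1,((0,0),(1,0)))] \<in> Nsp"
proof -
  have s: "vec (smull (1) [((1),((0,0),(1,0))), ((1),((1,0),(0,0)))]) \<in> Nsp" by (rule Nv_smul[OF W6])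
  have e: "vec (smull (1) [((1),((0,0),(1,0))), ((1),((1,0),(0,0)))]) = (vec [(1,((1,0),(0,0))), (1,((0,0),(1,0)))] :: bv \<times> bv \<Rightarrow> K)"
    by (rule vec_eqI, simp add: smull_def field_simps qq_nz, ((intro conjI)?; algebra)?)
  show ?thesis using s unfolding e .
qed

lemma W7: "vec [((qq^2),((0,0),(1,1))), ((1),((1,1),(0,0)))] \<in> Nsp"
proof -
  have h: "vec (app2l (El 0) Idl [(1,((0,0),(0,0)))] @ app2l (Tinvl 0) (El 0) [(1,((0,0),(0,0)))]) \<in> Nsp"
    by (intro Nv_e Nv_f Nv_zz Nv_zizi Nv_zsum Nv_base; simp)
  have e: "vec (app2l (El 0) Idl [(1,((0,0),(0,0)))] @ app2l (Tinvl 0) (El 0) [(1,((0,0),(0,0)))]) = (vec [((qq^2),((0,0),(1,1))), ((1),((1,1),(0,0)))] :: bv \<times> bv \<Rightarrow> K)"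
    by (rule vec_eqI, simp add: evl power_int_minus field_simps qq_nz, ((intro conjI)?; algebra)?)
  show ?thesis using h unfolding e .
qed

lemma A2: "vec [(1,((1,1),(0,0))), (qq^2,((0,0),(1,1)))] \<in> Nsp"
proof -
  have s: "vec (smull (1) [((qq^2),((0,0),(1,1))), ((1),((1,1),(0,0)))]) \<in> Nsp" by (rule Nv_smul[OF W7])
  have e: "vec (smull (1) [((qq^2),((0,0),(1,1))), ((1),((1,1),(0,0)))]) = (vec [(1,((1,1),(0,0))), (qq^2,((0,0),(1,1)))] :: bv \<times> bv \<Rightarrow> K)"
    by (rule vec_eqI, simp add: smull_def field_simps qq_nz, ((intro conjI)?; algebra)?)
  show ?thesis using s unfolding e .
qed

lemma W8: "vec [((qq^4) * (1 + qq^2) / qq,((0,0),(2,2))), ((qq) * (1 + qq^2) / qq,((1,1),(1,1))), ((1) * (1 + qq^2) / qq,((2,2),(0,0)))] \<in> Nsp"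
proof -
  have h: "vec (app2l (El 0) Idl (app2l (El 0) Idl [(1,((0,0),(0,0)))] @ app2l (Tinvl 0) (El 0) [(1,((0,0),(0,0)))]) @ app2l (Tinvl 0) (El 0) (app2l (El 0) Idl [(1,((0,0),(0,0)))] @ app2l (Tinvl 0) (El 0) [(1,((0,0),(0,0)))])) \<in> Nsp"
    by (intro Nv_e Nv_f Nv_zz Nv_zizi Nv_zsum Nv_base; simp)
  have e: "vec (app2l (El 0) Idl (app2l (El 0) Idl [(1,((0,0),(0,0)))] @ app2l (Tinvl 0) (El 0) [(1,((0,0),(0,0)))]) @ app2l (Tinvl 0) (El 0) (app2l (El 0) Idl [(1,((0,0),(0,0)))] @ app2l (Tinvl 0) (El 0) [(1,((0,0),(0,0)))])) = (vec [((qq^4) * (1 + qq^2) / qq,((0,0),(2,2))), ((qq) * (1 + qq^2) / qq,((1,1),(1,1))), ((1) * (1 + qq^2) / qq,((2,2),(0,0)))] :: bv \<times> bv \<Rightarrow> K)"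
    by (rule vec_eqI, simp add: evl power_int_minus field_simps qq_nz, ((intro conjI)?; algebra)?)
  show ?thesis using h unfolding e .
qed

lemma A3: "vec [(1,((2,2),(0,0))), (qq^4,((0,0),(2,2))), (qq,((1,1),(1,1)))] \<in> Nsp"
proof -
  have s: "vec (smull (qq / (1 + qq^2)) [((qq^4) * (1 + qq^2) / qq,((0,0),(2,2))), ((qq) * (1 + qq^2) / qq,((1,1),(1,1))), ((1) * (1 + qq^2) / qq,((2,2),(0,0)))]) \<in> Nsp" by (rule Nv_smul[OF W8])
  have c0: "qq / (1 + qq^2) * ((1) * (1 + qq^2) / qq) = 1" by (rule cancelK) (simp_all add: nz1 nz2 qq_nz)
  have c1: "qq / (1 + qq^2) * ((qq^4) * (1 + qq^2) / qq) = qq^4" by (rule cancelK) (simp_all add: nz1 nz2 qq_nz)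
  have c2: "qq / (1 + qq^2) * ((qq) * (1 + qq^2) / qq) = qq" by (rule cancelK) (simp_all add: nz1 nz2 qq_nz)
  have e: "vec (smull (qq / (1 + qq^2)) [((qq^4) * (1 + qq^2) / qq,((0,0),(2,2))), ((qq) * (1 + qq^2) / qq,((1,1),(1,1))), ((1) * (1 + qq^2) / qq,((2,2),(0,0)))]) = (vec [(1,((2,2),(0,0))), (qq^4,((0,0),(2,2))), (qq,((1,1),(1,1)))] :: bv \<times> bv \<Rightarrow> K)"
    by (simp only: smull_def list.map prod.case c0 c1 c2; (rule vec_eqI, simp)?)
  show ?thesis using s unfolding e .
qed

lemma W9: "vec [((1) * (1 + qq^2) / qq,((1,0),(1,2))), ((qq) * (1 + qq^2) / qq,((1,1),(1,1))), ((qq^4) * (1 + qq^2) / qq,((1,2),(1,0)))] \<in> Nsp"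
proof -
  have h: "vec (app2l (Zl 1) (Zl 1) (app2l (Fl 1) (Tl 1) (app2l (Fl 1) (Tl 1) [(1,((0,0),(0,0)))] @ app2l Idl (Fl 1) [(1,((0,0),(0,0)))]) @ app2l Idl (Fl 1) (app2l (Fl 1) (Tl 1) [(1,((0,0),(0,0)))] @ app2l Idl (Fl 1) [(1,((0,0),(0,0)))]))) \<in> Nsp"
    by (intro Nv_e Nv_f Nv_zz Nv_zizi Nv_zsum Nv_base; simp)
  have e: "vec (app2l (Zl 1) (Zl 1) (app2l (Fl 1) (Tl 1) (app2l (Fl 1) (Tl 1) [(1,((0,0),(0,0)))] @ app2l Idl (Fl 1) [(1,((0,0),(0,0)))]) @ app2l Idl (Fl 1) (app2l (Fl 1) (Tl 1) [(1,((0,0),(0,0)))] @ app2l Idl (Fl 1) [(1,((0,0),(0,0)))]))) = (vec [((1) * (1 + qq^2) / qq,((1,0),(1,2))), ((qq) * (1 + qq^2) / qq,((1,1),(1,1))), ((qq^4) * (1 + qq^2) / qq,((1,2),(1,0)))] :: bv \<times> bv \<Rightarrow> K)"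
    by (rule vec_eqI, simp add: evl power_int_minus field_simps qq_nz, ((intro conjI)?; algebra)?)
  show ?thesis using h unfolding e .
qed

lemma A4: "vec [(1,((1,0),(1,2))), (qq,((1,1),(1,1))), (qq^4,((1,2),(1,0)))] \<in> Nsp"
proof -
  have s: "vec (smull (qq / (1 + qq^2)) [((1) * (1 + qq^2) / qq,((1,0),(1,2))), ((qq) * (1 + qq^2) / qq,((1,1),(1,1))), ((qq^4) * (1 + qq^2) / qq,((1,2),(1,0)))]) \<in> Nsp" by (rule Nv_smul[OF W9])
  have c0: "qq / (1 + qq^2) * ((1) * (1 + qq^2) / qq) = 1" by (rule cancelK) (simp_all add: nz1 nz2 qq_nz)
  have c1: "qq / (1 + qq^2) * ((qq) * (1 + qq^2) / qq) = qq" by (rule cancelK) (simp_all add: nz1 nz2 qq_nz)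
  have c2: "qq / (1 + qq^2) * ((qq^4) * (1 + qq^2) / qq) = qq^4" by (rule cancelK) (simp_all add: nz1 nz2 qq_nz)
  have e: "vec (smull (qq / (1 + qq^2)) [((1) * (1 + qq^2) / qq,((1,0),(1,2))), ((qq) * (1 + qq^2) / qq,((1,1),(1,1))), ((qq^4) * (1 + qq^2) / qq,((1,2),(1,0)))]) = (vec [(1,((1,0),(1,2))), (qq,((1,1),(1,1))), (qq^4,((1,2),(1,0)))] :: bv \<times> bv \<Rightarrow> K)"
    by (simp only: smull_def list.map prod.case c0 c1 c2; (rule vec_eqI, simp)?)
  show ?thesis using s unfolding e .
qed

lemma W10: "vec [((1) * ((1 + qq^2) * (1 + qq^2 + qq^4)) / qq^3,((1,1),(1,2))), ((qq^2) * ((1 + qq^2) * (1 + qq^2 + qq^4)) / qq^3,((1,2),(1,1)))] \<in> Nsp"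
proof -
  have h: "vec (app2l (Zl 1) (Zl 1) (app2l (Fl 1) (Tl 1) (app2l (Fl 1) (Tl 1) (app2l (Fl 1) (Tl 1) [(1,((0,0),(0,0)))] @ app2l Idl (Fl 1) [(1,((0,0),(0,0)))]) @ app2l Idl (Fl 1) (app2l (Fl 1) (Tl 1) [(1,((0,0),(0,0)))] @ app2l Idl (Fl 1) [(1,((0,0),(0,0)))])) @ app2l Idl (Fl 1) (app2l (Fl 1) (Tl 1) (app2l (Fl 1) (Tl 1) [(1,((0,0),(0,0)))] @ app2l Idl (Fl 1) [(1,((0,0),(0,0)))]) @ app2l Idl (Fl 1) (app2l (Fl 1) (Tl 1) [(1,((0,0),(0,0)))] @ app2l Idl (Fl 1) [(1,((0,0),(0,0)))])))) \<in> Nsp"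
    by (intro Nv_e Nv_f Nv_zz Nv_zizi Nv_zsum Nv_base; simp)
  have e: "vec (app2l (Zl 1) (Zl 1) (app2l (Fl 1) (Tl 1) (app2l (Fl 1) (Tl 1) (app2l (Fl 1) (Tl 1) [(1,((0,0),(0,0)))] @ app2l Idl (Fl 1) [(1,((0,0),(0,0)))]) @ app2l Idl (Fl 1) (app2l (Fl 1) (Tl 1) [(1,((0,0),(0,0)))] @ app2l Idl (Fl 1) [(1,((0,0),(0,0)))])) @ app2l Idl (Fl 1) (app2l (Fl 1) (Tl 1) (app2l (Fl 1) (Tl 1) [(1,((0,0),(0,0)))] @ app2l Idl (Fl 1) [(1,((0,0),(0,0)))]) @ app2l Idl (Fl 1) (app2l (Fl 1) (Tl 1) [(1,((0,0),(0,0)))] @ app2l Idl (Fl 1) [(1,((0,0),(0,0)))])))) = (vec [((1) * ((1 + qq^2) * (1 + qq^2 + qq^4)) / qq^3,((1,1),(1,2))), ((qq^2) * ((1 + qq^2) * (1 + qq^2 + qq^4)) / qq^3,((1,2),(1,1)))] :: bv \<times> bv \<Rightarrow> K)"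
    by (rule vec_eqI, simp add: evl power_int_minus field_simps qq_nz, ((intro conjI)?; algebra)?)
  show ?thesis using h unfolding e .
qed

lemma A5: "vec [(1,((1,1),(1,2))), (qq^2,((1,2),(1,1)))] \<in> Nsp"
proof -
  have s: "vec (smull (qq^3 / ((1 + qq^2) * (1 + qq^2 + qq^4))) [((1) * ((1 + qq^2) * (1 + qq^2 + qq^4)) / qq^3,((1,1),(1,2))), ((qq^2) * ((1 + qq^2) * (1 + qq^2 + qq^4)) / qq^3,((1,2),(1,1)))]) \<in> Nsp" by (rule Nv_smul[OF W10])
  have c0: "qq^3 / ((1 + qq^2) * (1 + qq^2 + qq^4)) * ((1) * ((1 + qq^2) * (1 + qq^2 + qq^4)) / qq^3) = 1" by (rule cancelK) (simp_all add: nz1 nz2 qq_nz)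
  have c1: "qq^3 / ((1 + qq^2) * (1 + qq^2 + qq^4)) * ((qq^2) * ((1 + qq^2) * (1 + qq^2 + qq^4)) / qq^3) = qq^2" by (rule cancelK) (simp_all add: nz1 nz2 qq_nz)
  have e: "vec (smull (qq^3 / ((1 + qq^2) * (1 + qq^2 + qq^4))) [((1) * ((1 + qq^2) * (1 + qq^2 + qq^4)) / qq^3,((1,1),(1,2))), ((qq^2) * ((1 + qq^2) * (1 + qq^2 + qq^4)) / qq^3,((1,2),(1,1)))]) = (vec [(1,((1,1),(1,2))), (qq^2,((1,2),(1,1)))] :: bv \<times> bv \<Rightarrow> K)"
    by (simp only: smull_def list.map prod.case c0 c1; (rule vec_eqI, simp)?)
  show ?thesis using s unfolding e .
qed

lemma W11: "vec [((1) * ((1 + qq^2) * (1 + qq^2) * (1 + qq^2 + qq^4)) / qq^4,((1,2),(2,2))), ((1) * ((1 + qq^2) * (1 + qq^2) * (1 + qq^2 + qq^4)) / qq^4,((2,2),(1,2)))] \<in> Nsp"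
proof -
  have h: "vec (app2l (Fl 1) (Tl 1) (app2l (El 0) Idl (app2l (El 0) Idl (app2l (El 0) Idl [(1,((0,0),(0,0)))] @ app2l (Tinvl 0) (El 0) [(1,((0,0),(0,0)))]) @ app2l (Tinvl 0) (El 0) (app2l (El 0) Idl [(1,((0,0),(0,0)))] @ app2l (Tinvl 0) (El 0) [(1,((0,0),(0,0)))])) @ app2l (Tinvl 0) (El 0) (app2l (El 0) Idl (app2l (El 0) Idl [(1,((0,0),(0,0)))] @ app2l (Tinvl 0) (El 0) [(1,((0,0),(0,0)))]) @ app2l (Tinvl 0) (El 0) (app2l (El 0) Idl [(1,((0,0),(0,0)))] @ app2l (Tinvl 0) (El 0) [(1,((0,0),(0,0)))]))) @ app2l Idl (Fl 1) (app2l (El 0) Idl (app2l (El 0) Idl (app2l (El 0) Idl [(1,((0,0),(0,0)))] @ app2l (Tinvl 0) (El 0) [(1,((0,0),(0,0)))]) @ app2l (Tinvl 0) (El 0) (app2l (El 0) Idl [(1,((0,0),(0,0)))] @ app2l (Tinvl 0) (El 0) [(1,((0,0),(0,0)))])) @ app2l (Tinvl 0) (El 0) (app2l (El 0) Idl (app2l (El 0) Idl [(1,((0,0),(0,0)))] @ app2l (Tinvl 0) (El 0) [(1,((0,0),(0,0)))]) @ app2l (Tinvl 0) (El 0) (app2l (El 0) Idl [(1,((0,0),(0,0)))] @ app2l (Tinvl 0) (El 0) [(1,((0,0),(0,0)))])))) \<in> Nsp"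
    by (intro Nv_e Nv_f Nv_zz Nv_zizi Nv_zsum Nv_base; simp)
  have e: "vec (app2l (Fl 1) (Tl 1) (app2l (El 0) Idl (app2l (El 0) Idl (app2l (El 0) Idl [(1,((0,0),(0,0)))] @ app2l (Tinvl 0) (El 0) [(1,((0,0),(0,0)))]) @ app2l (Tinvl 0) (El 0) (app2l (El 0) Idl [(1,((0,0),(0,0)))] @ app2l (Tinvl 0) (El 0) [(1,((0,0),(0,0)))])) @ app2l (Tinvl 0) (El 0) (app2l (El 0) Idl (app2l (El 0) Idl [(1,((0,0),(0,0)))] @ app2l (Tinvl 0) (El 0) [(1,((0,0),(0,0)))]) @ app2l (Tinvl 0) (El 0) (app2l (El 0) Idl [(1,((0,0),(0,0)))] @ app2l (Tinvl 0) (El 0) [(1,((0,0),(0,0)))]))) @ app2l Idl (Fl 1) (app2l (El 0) Idl (app2l (El 0) Idl (app2l (El 0) Idl [(1,((0,0),(0,0)))] @ app2l (Tinvl 0) (El 0) [(1,((0,0),(0,0)))]) @ app2l (Tinvl 0) (El 0) (app2l (El 0) Idl [(1,((0,0),(0,0)))] @ app2l (Tinvl 0) (El 0) [(1,((0,0),(0,0)))])) @ app2l (Tinvl 0) (El 0) (app2l (El 0) Idl (app2l (El 0) Idl [(1,((0,0),(0,0)))] @ app2l (Tinvl 0) (El 0) [(1,((0,0),(0,0)))]) @ app2l (Tinvl 0) (El 0) (app2l (El 0) Idl [(1,((0,0),(0,0)))] @ app2l (Tinvl 0) (El 0) [(1,((0,0),(0,0)))])))) = (vec [((1) * ((1 +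 qq^2) * (1 + qq^2) * (1 + qq^2 + qq^4)) / qq^4,((1,2),(2,2))), ((1) * ((1 + qq^2) * (1 + qq^2) * (1 + qq^2 + qq^4)) / qq^4,((2,2),(1,2)))] :: bv \<times> bv \<Rightarrow> K)"
    by (rule vec_eqI, simp add: evl power_int_minus field_simps qq_nz, ((intro conjI)?; algebra)?)
  show ?thesis using h unfolding e .
qed

lemma A6: "vec [(1,((2,2),(1,2))), (1,((1,2),(2,2)))] \<in> Nsp"
proof -
  have s: "vec (smull (qq^4 / ((1 + qq^2) * (1 + qq^2) * (1 + qq^2 + qq^4))) [((1) * ((1 + qq^2) * (1 + qq^2) * (1 + qq^2 + qq^4)) / qq^4,((1,2),(2,2))), ((1) * ((1 + qq^2) * (1 + qq^2) * (1 + qq^2 + qq^4)) / qq^4,((2,2),(1,2)))]) \<in> Nsp" by (rule Nv_smul[OF W11])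
  have c0: "qq^4 / ((1 + qq^2) * (1 + qq^2) * (1 + qq^2 + qq^4)) * ((1) * ((1 + qq^2) * (1 + qq^2) * (1 + qq^2 + qq^4)) / qq^4) = 1" by (rule cancelK) (simp_all add: nz1 nz2 qq_nz)
  have c1: "qq^4 / ((1 + qq^2) * (1 + qq^2) * (1 + qq^2 + qq^4)) * ((1) * ((1 + qq^2) * (1 + qq^2) * (1 + qq^2 + qq^4)) / qq^4) = 1" by (rule cancelK) (simp_all add: nz1 nz2 qq_nz)
  have e: "vec (smull (qq^4 / ((1 + qq^2) * (1 + qq^2) * (1 + qq^2 + qq^4))) [((1) * ((1 + qq^2) * (1 + qq^2) * (1 + qq^2 + qq^4)) / qq^4,((1,2),(2,2))), ((1) * ((1 + qq^2) * (1 + qq^2) * (1 + qq^2 + qq^4)) / qq^4,((2,2),(1,2)))]) = (vec [(1,((2,2),(1,2))), (1,((1,2),(2,2)))] :: bv \<times> bv \<Rightarrow> K)"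
    by (simp only: smull_def list.map prod.case c0 c1; (rule vec_eqI, simp)?)
  show ?thesis using s unfolding e .
qed

section \<open>The ring A\<close>

lemma ringA_I: "poly r 0 \<noteq> 0 \<Longrightarrow> Fract p r \<in> ringA"
  unfolding ringA_def by blast
lemma ringA_E: "x \<in> ringA \<Longrightarrow> (\<And>p r. poly r 0 \<noteq> 0 \<Longrightarrow> x = Fract p r \<Longrightarrow> P) \<Longrightarrow> P"
  unfolding ringA_def by blast
lemma ringA_one[simp]: "1 \<in> ringA"
  by (simp add: One_fract_def ringA_I)
lemma ringA_zero[simp]: "0 \<in> ringA"
  by (simp add: Zero_fract_def ringA_I)
lemma ringA_qq[simp]: "qq \<in> ringA"
  by (simp add: qq_def ringA_I)
lemma ringA_add[simp]: "x \<in> ringA \<Longrightarrow> y \<in> ringA \<Longrightarrow> x + y \<in> ringA"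
proof -
  assume "x \<in> ringA" "y \<in> ringA"
  then obtain p r p' r' where h: "poly r 0 \<noteq> 0" "x = Fract p r" "poly r' 0 \<noteq> 0" "y = Fract p' r'"
    by (meson ringA_E)
  have nz: "r \<noteq> 0" "r' \<noteq> 0" using h(1,3) by auto
  have "x + y = Fract (p * r' + p' * r) (r * r')" using nz by (simp add: h(2,4))
  moreover have "poly (r * r') 0 \<noteq> 0" using h(1,3) by simp
  ultimately show ?thesis by (simp add: ringA_I)
qed
lemma ringA_mult[simp]: "x \<in> ringA \<Longrightarrow> y \<in> ringA \<Longrightarrow> x * y \<in> ringA"
proof -
  assume "x \<in> ringA" "y \<in> ringA"
  then obtain p r p' r' where h: "poly r 0 \<noteq> 0" "x = Fract p r" "poly r' 0 \<noteq> 0" "y = Fract p' r'"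
    by (meson ringA_E)
  have "x * y = Fract (p * p') (r * r')" by (simp add: h(2,4))
  moreover have "poly (r * r') 0 \<noteq> 0" using h(1,3) by simp
  ultimately show ?thesis by (simp add: ringA_I)
qed
lemma ringA_uminus[simp]: "x \<in> ringA \<Longrightarrow> - x \<in> ringA"
proof -
  assume "x \<in> ringA"
  then obtain p r where h: "poly r 0 \<noteq> 0" "x = Fract p r" by (meson ringA_E)
  have "- x = Fract (- p) r" by (simp add: h(2))
  then show ?thesis using h(1) by (simp add: ringA_I)
qed
lemma ringA_diff[simp]: "x \<in> ringA \<Longrightarrow> y \<in> ringA \<Longrightarrow> x - y \<in> ringA"
  using ringA_add[of x "- y"] by simp
lemma ringA_pow[simp]: "x \<in> ringA \<Longrightarrow> x ^ n \<in> ringA"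
  by (induction n) simp_all
lemma ringA_of_nat[simp]: "of_nat n \<in> ringA"
  by (induction n) simp_all
lemma ringA_numeral[simp]: "numeral n \<in> ringA"
proof -
  have "(numeral n :: K) = of_nat (numeral n)" by simp
  then show ?thesis using ringA_of_nat by metis
qed

lemma fs_app2:
  assumes f: "fs f" and X: "\<And>x. fs (X x)" and Y: "\<And>y. fs (Y y)"
  shows "fs (app2 X Y f)"
proof -
  let ?S = "\<Union>p\<in>{p. f p \<noteq> 0}. {y. X (fst p) y \<noteq> 0} \<times> {y. Y (snd p) y \<noteq> 0}"
  have fin: "finite ?S"
  proof (rule finite_UN_I)
    show "finite {p. f p \<noteq> 0}" using f by (simp add: fs_def)
    fix p show "finite ({y. X (fst p) y \<noteq> 0} \<times> {y. Y (snd p) y \<noteq> 0})"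
      using X[of "fst p"] Y[of "snd p"] unfolding fs_def by (rule finite_cartesian_product)
  qed
  have "{q. app2 X Y f q \<noteq> 0} \<subseteq> ?S"
  proof
    fix q assume q: "q \<in> {q. app2 X Y f q \<noteq> 0}"
    obtain y1 y2 where qq: "q = (y1,y2)" by (cases q) simp
    have "(\<Sum>p\<in>{p. f p \<noteq> 0}. f p * X (fst p) y1 * Y (snd p) y2) \<noteq> 0"
      using q by (simp add: qq app2_def)
    then obtain p where p: "p \<in> {p. f p \<noteq> 0}" "f p * X (fst p) y1 * Y (snd p) y2 \<noteq> 0"
      using sum.not_neutral_contains_not_neutral by blast
    then have "X (fst p) y1 \<noteq> 0" "Y (snd p) y2 \<noteq> 0" by auto
    then show "q \<in> ?S" using p(1) unfolding qq by blast
  qed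
  then show ?thesis unfolding fs_def using fin by (rule finite_subset)
qed

lemma fs_vadd: "fs f \<Longrightarrow> fs g \<Longrightarrow> fs (vadd f g)"
  unfolding fs_def vadd_def
  by (rule finite_subset[of _ "{p. f p \<noteq> 0} \<union> {p. g p \<noteq> 0}"]) auto

lemma fs_ops: "fs (opE i x)" "fs (opF i x)" "fs (opT i x)" "fs (opTinv i x)" "fs (opId x)" "fs (opZ b x)"
  "fs (opQ n0 n1 nd x)"
  by (simp_all only: opE_l opF_l opT_l opTinv_l opId_l opZ_l opQ_l fs_vec)

lemma Nsp_fs: "f \<in> Nsp \<Longrightarrow> fs f"
proof (induction rule: Nsp.induct)
  case N_base then show ?case by (simp only: dlt_vec fs_vec)
next
  case (N_add f g) then show ?case by (simp add: fs_vadd)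
next
  case (N_smul f c)
  have "{p. c * f p \<noteq> 0} \<subseteq> {p. f p \<noteq> 0}" by auto
  then show ?case using N_smul.IH unfolding fs_def by (rule finite_subset)
next
  case (N_e f i) then show ?case by (intro fs_vadd fs_app2) (simp_all add: fs_ops)
next
  case (N_f f i) then show ?case by (intro fs_vadd fs_app2) (simp_all add: fs_ops)
next
  case (N_q f n0 n1 nd) then show ?case by (intro fs_vadd fs_app2) (simp_all add: fs_ops)
next
  case (N_zz f) then show ?case by (intro fs_vadd fs_app2) (simp_all add: fs_ops)
next
  case (N_zizi f) then show ?case by (intro fs_vadd fs_app2) (simp_all add: fs_ops)
next
  case (N_zsum f) then show ?case by (intro fs_vadd fs_app2) (simp_all add: fs_ops)
qed

lemma Nsp_zero: "(\<lambda>_. 0) \<in> Nsp"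
  using N_smul[OF N_base, of 0] by simp

definition excB :: "bv \<Rightarrow> bv \<Rightarrow> int" where "excB w gr = fst w - fst gr"
definition excC :: "bv \<Rightarrow> bv \<Rightarrow> int" where "excC w gr = fst w - fst gr + int (snd gr) - int (snd w)"
definition cone :: "bv \<Rightarrow> bv \<Rightarrow> bool" where
  "cone w gr \<longleftrightarrow> valid w \<and> excB w gr \<ge> 0 \<and> excC w gr \<ge> 0 \<and> \<not> (excB w gr = 0 \<and> excC w gr = 0)"
definition potf :: "gseq \<Rightarrow> bv \<Rightarrow> bv \<Rightarrow> int" where
  "potf s gr w = (case s of SeqA \<Rightarrow> (if gr = (1,2) then excC w gr else excB w gr) | SeqB \<Rightarrow> excB w gr + excC w gr)"
definition dd :: "gseq \<Rightarrow> int" where "dd s = (case s of SeqA \<Rightarrow> 1 | SeqB \<Rightarrow> 2)"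

lemma potf_shift: "potf s gr (zsh 1 w) = potf s gr w + dd s"
  by (cases s) (simp_all add: potf_def dd_def excB_def excC_def zsh_def)

lemma cone_shift: "cone w gr \<Longrightarrow> cone (zsh 1 w) gr"
  by (auto simp: cone_def excB_def excC_def zsh_def valid_def)

lemma valid_shift: "valid (zsh b w) = valid w"
  by (simp add: valid_def zsh_def)

inductive_set Gs :: "bv \<Rightarrow> (bv \<Rightarrow> int) \<Rightarrow> int \<Rightarrow> (bv \<times> bv \<Rightarrow> K) set"
  for gp :: bv and P :: "bv \<Rightarrow> int" and E :: int where
  G_N: "f \<in> Nsp \<Longrightarrow> f \<in> Gs gp P E"
| G_t: "u \<in> ringA \<Longrightarrow> cone w' gp \<Longrightarrow> valid x \<Longrightarrow> int v + E \<ge> 1 + P w' \<Longrightarrow>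
        (\<lambda>p. qq ^ v * u * dlt (x, w') p) \<in> Gs gp P E"
| G_add: "f \<in> Gs gp P E \<Longrightarrow> h \<in> Gs gp P E \<Longrightarrow> vadd f h \<in> Gs gp P E"

lemma Gs_mono: "f \<in> Gs gp P E \<Longrightarrow> E \<le> E' \<Longrightarrow> f \<in> Gs gp P E'"
proof (induction rule: Gs.induct)
  case (G_N f) from G_N.hyps show ?case by (rule Gs.G_N)
next
  case (G_t u w' x v) then show ?case by (intro Gs.G_t) auto
next
  case (G_add f h) then show ?case by (intro Gs.G_add) auto
qed

lemma term_vec: "(\<lambda>p. c * dlt q p) = vec [(c, q)]"
  by (rule ext) (simp add: dlt_def)

lemma Gs_fs: "f \<in> Gs gp P E \<Longrightarrow> fs f"
proof (induction rule: Gs.induct)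
  case (G_N f) from G_N.hyps show ?case by (rule Nsp_fs)
next
  case (G_t u w' x v) then show ?case by (simp only: term_vec fs_vec)
next
  case (G_add f h) from G_add.IH show ?case by (rule fs_vadd)
qed

definition E1op :: "(bv \<times> bv \<Rightarrow> K) \<Rightarrow> (bv \<times> bv \<Rightarrow> K)" where
  "E1op f = vadd (app2 (opZ 1) opId f) (app2 opId (opZ 1) f)"

lemma E1op_add: "fs f \<Longrightarrow> fs h \<Longrightarrow> E1op (vadd f h) = vadd (E1op f) (E1op h)"
  unfolding E1op_def by (simp add: app2_add) (simp add: vadd_def fun_eq_iff algebra_simps)

lemma E1op_term: "E1op (\<lambda>p. c * dlt q p) =
   vadd (\<lambda>p. c * dlt (zsh 1 (fst q), snd q) p) (\<lambda>p. c * dlt (fst q, zsh 1 (snd q)) p)"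
proof -
  have "E1op (vec [(c,q)]) = vadd (vec [(c, (zsh 1 (fst q), snd q))]) (vec [(c, (fst q, zsh 1 (snd q)))])"
    unfolding E1op_def
    by (simp only: app2_vec[OF opZ_l opId_l] app2_vec[OF opId_l opZ_l])
       (simp add: app2l_def tens_def smull_def Zl_def Idl_def)
  then show ?thesis by (simp only: term_vec)
qed

lemma Gs_E1:
  assumes "f \<in> Gs gp P E" and Psh: "\<And>w. P (zsh 1 w) = P w + d" and d: "d \<ge> 0"
  shows "E1op f \<in> Gs gp P (E + d)"
  using assms(1)
proof (induction rule: Gs.induct)
  case (G_N f)
  then show ?case unfolding E1op_def by (intro Gs.G_N Nsp.N_zsum)
next
  case (G_t u w' x v)
  have e: "E1op (\<lambda>p. qq ^ v * u * dlt (x, w') p) =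
     vadd (\<lambda>p. qq ^ v * u * dlt (zsh 1 x, w') p) (\<lambda>p. qq ^ v * u * dlt (x, zsh 1 w') p)"
    using E1op_term[of "qq ^ v * u" "(x,w')"] by simp
  show ?case unfolding e
  proof (rule Gs.G_add)
    show "(\<lambda>p. qq ^ v * u * dlt (zsh 1 x, w') p) \<in> Gs gp P (E + d)"
      using G_t d by (intro Gs.G_t) (auto simp: valid_shift)
    show "(\<lambda>p. qq ^ v * u * dlt (x, zsh 1 w') p) \<in> Gs gp P (E + d)"
      using G_t by (intro Gs.G_t) (auto simp: cone_shift Psh)
  qed
next
  case (G_add f h)
  have "fs f" "fs h" using G_add.hyps by (auto intro: Gs_fs)
  then show ?case using G_add.IH by (simp add: E1op_add Gs.G_add)
qed

lemma rel_step:
  assumes "dlt (wp, gp) \<in> Gs gp P E0" and Psh: "\<And>w. P (zsh 1 w) = P w + d" and "d \<ge> 0"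
    and "cone (zsh 1 gp) gp" and "valid wp" and "E0 + d \<ge> 1 + P (zsh 1 gp)"
  shows "dlt (zsh 1 wp, gp) \<in> Gs gp P (E0 + d)"
proof -
  have a: "E1op (dlt (wp,gp)) \<in> Gs gp P (E0 + d)" using Gs_E1[OF assms(1) Psh assms(3)] .
  have b: "(\<lambda>p. qq ^ 0 * (-1) * dlt (wp, zsh 1 gp) p) \<in> Gs gp P (E0 + d)"
    using assms by (intro Gs.G_t) auto
  have "E1op (dlt (wp,gp)) = vadd (dlt (zsh 1 wp, gp)) (dlt (wp, zsh 1 gp))"
    using E1op_term[of 1 "(wp,gp)"] by (simp add: fun_eq_iff)
  then have "dlt (zsh 1 wp, gp) = vadd (E1op (dlt (wp,gp))) (\<lambda>p. qq ^ 0 * (-1) * dlt (wp, zsh 1 gp) p)"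
    by (simp add: vadd_def fun_eq_iff)
  then show ?thesis using Gs.G_add[OF a b] by simp
qed

definition tsum :: "(nat \<times> K \<times> bv \<times> bv) list \<Rightarrow> (K \<times> (bv \<times> bv)) list" where
  "tsum T = map (\<lambda>(v,u,k). (qq ^ v * u, k)) T"

lemma tsum_Gs:
  assumes "\<forall>(v,u,k)\<in>set T. u \<in> ringA \<and> cone (snd k) gp \<and> valid (fst k) \<and> int v + E \<ge> 1 + P (snd k)"
  shows "vec (tsum T) \<in> Gs gp P E"
  using assms
proof (induction T)
  case Nil
  have "vec (tsum []) = (\<lambda>_. 0)" by (rule ext) (simp add: tsum_def)
  then show ?case using Nsp_zero Gs.G_N by metis
next
  case (Cons a T)
  obtain v u k where a: "a = (v,u,k)" by (cases a) auto
  have t: "(\<lambda>p. qq ^ v * u * dlt (fst k, snd k) p) \<in> Gs gp P E"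
    using Cons.prems a by (intro Gs.G_t) auto
  have "vec (tsum (a # T)) = vadd (\<lambda>p. qq ^ v * u * dlt (fst k, snd k) p) (vec (tsum T))"
    by (rule ext) (simp add: a tsum_def vadd_def dlt_def)
  then show ?case using Gs.G_add[OF t Cons.IH] Cons.prems by simp
qed

lemma G_from_rel:
  assumes "vec ((1,(w,gp)) # map (\<lambda>(c,k). (- c, k)) (tsum T)) \<in> Nsp"
    and "\<forall>(v,u,k)\<in>set T. u \<in> ringA \<and> cone (snd k) gp \<and> valid (fst k) \<and> int v + E \<ge> 1 + P (snd k)"
  shows "dlt (w,gp) \<in> Gs gp P E"
proof -
  have neg: "vec (map (\<lambda>(c,k). (- c, k)) xs) y = - vec xs y" for xs :: "(K \<times> (bv \<times> bv)) list" and y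
    by (induction xs) auto
  have "dlt (w,gp) = vadd (vec (tsum T)) (vec ((1,(w,gp)) # map (\<lambda>(c,k). (- c, k)) (tsum T)))"
    by (rule ext) (simp add: vadd_def neg dlt_def)
  then show ?thesis using Gs.G_add[OF tsum_Gs[OF assms(2)] Gs.G_N[OF assms(1)]] by simp
qed

lemma bB0: "dlt ((0,0), (0,1)) \<in> Gs (0,1) (potf SeqB (0,1)) (potf SeqB (0,1) (0,0))"
proof (rule G_from_rel[where T = "[(2, -1, ((0,1),(0,0)))]"])
  have "vec ((1,((0,0), (0,1))) # map (\<lambda>(c,k). (- c, k)) (tsum [(2, -1, ((0,1),(0,0)))])) = (vec [(1,((0,0),(0,1))), (qq^2,((0,1),(0,0)))] :: bv \<times> bv \<Rightarrow> K)"
    by (rule vec_eqI) (simp add: tsum_def algebra_simps power2_eq_square power3_eq_cube)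
  then show "vec ((1,((0,0), (0,1))) # map (\<lambda>(c,k). (- c, k)) (tsum [(2, -1, ((0,1),(0,0)))])) \<in> Nsp"
    using B0 by simp
  show "\<forall>(v,u,k)\<in>set [(2, -1, ((0,1),(0,0)))]. u \<in> ringA \<and> cone (snd k) (0,1) \<and> valid (fst k) \<and>
        int v + potf SeqB (0,1) (0,0) \<ge> 1 + potf SeqB (0,1) (snd k)"
    by (simp add: cone_def excB_def excC_def valid_def potf_def)
qed

lemma bB1: "dlt ((1,0), (0,1)) \<in> Gs (0,1) (potf SeqB (0,1)) (potf SeqB (0,1) (1,0))"
proof (rule G_from_rel[where T = "[(0, qq^4 - 1, ((0,0),(1,1))), (2, -1, ((0,1),(1,0)))]"])
  have "vec ((1,((1,0), (0,1))) # map (\<lambda>(c,k). (- c, k)) (tsum [(0, qq^4 - 1, ((0,0),(1,1))), (2, -1, ((0,1),(1,0)))])) = (vec [(1,((1,0),(0,1))), (1 - qq^4,((0,0),(1,1))), (qq^2,((0,1),(1,0)))] :: bv \<times> bv \<Rightarrow> K)"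
    by (rule vec_eqI) (simp add: tsum_def algebra_simps power2_eq_square power3_eq_cube)
  then show "vec ((1,((1,0), (0,1))) # map (\<lambda>(c,k). (- c, k)) (tsum [(0, qq^4 - 1, ((0,0),(1,1))), (2, -1, ((0,1),(1,0)))])) \<in> Nsp"
    using B1 by simp
  show "\<forall>(v,u,k)\<in>set [(0, qq^4 - 1, ((0,0),(1,1))), (2, -1, ((0,1),(1,0)))]. u \<in> ringA \<and> cone (snd k) (0,1) \<and> valid (fst k) \<and>
        int v + potf SeqB (0,1) (1,0) \<ge> 1 + potf SeqB (0,1) (snd k)"
    by (simp add: cone_def excB_def excC_def valid_def potf_def)
qed

lemma bB2: "dlt ((1,1), (0,1)) \<in> Gs (0,1) (potf SeqB (0,1)) (potf SeqB (0,1) (1,1))"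
proof (rule G_from_rel[where T = "[(1, -(1+qq^2), ((0,0),(1,2))), (2, -1, ((0,1),(1,1))), (1, -(1+qq^2), ((1,2),(0,0)))]"])
  have "vec ((1,((1,1), (0,1))) # map (\<lambda>(c,k). (- c, k)) (tsum [(1, -(1+qq^2), ((0,0),(1,2))), (2, -1, ((0,1),(1,1))), (1, -(1+qq^2), ((1,2),(0,0)))])) = (vec [(1,((1,1),(0,1))), (qq + qq^3,((0,0),(1,2))), (qq^2,((0,1),(1,1))), (qq + qq^3,((1,2),(0,0)))] :: bv \<times> bv \<Rightarrow> K)"
    by (rule vec_eqI) (simp add: tsum_def algebra_simps power2_eq_square power3_eq_cube)
  then show "vec ((1,((1,1), (0,1))) # map (\<lambda>(c,k). (- c, k)) (tsum [(1, -(1+qq^2), ((0,0),(1,2))), (2, -1, ((0,1),(1,1))), (1, -(1+qq^2), ((1,2),(0,0)))])) \<in> Nsp"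
    using B2 by simp
  show "\<forall>(v,u,k)\<in>set [(1, -(1+qq^2), ((0,0),(1,2))), (2, -1, ((0,1),(1,1))), (1, -(1+qq^2), ((1,2),(0,0)))]. u \<in> ringA \<and> cone (snd k) (0,1) \<and> valid (fst k) \<and>
        int v + potf SeqB (0,1) (1,1) \<ge> 1 + potf SeqB (0,1) (snd k)"
    by (simp add: cone_def excB_def excC_def valid_def potf_def)
qed

lemma bB3: "dlt ((1,2), (0,1)) \<in> Gs (0,1) (potf SeqB (0,1)) (potf SeqB (0,1) (1,2))"
proof (rule G_from_rel[where T = "[(2, -1, ((0,1),(1,2)))]"])
  have "vec ((1,((1,2), (0,1))) # map (\<lambda>(c,k). (- c, k)) (tsum [(2, -1, ((0,1),(1,2)))])) = (vec [(1,((1,2),(0,1))), (qq^2,((0,1),(1,2)))] :: bv \<times> bv \<Rightarrow> K)"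
    by (rule vec_eqI) (simp add: tsum_def algebra_simps power2_eq_square power3_eq_cube)
  then show "vec ((1,((1,2), (0,1))) # map (\<lambda>(c,k). (- c, k)) (tsum [(2, -1, ((0,1),(1,2)))])) \<in> Nsp"
    using B3 by simp
  show "\<forall>(v,u,k)\<in>set [(2, -1, ((0,1),(1,2)))]. u \<in> ringA \<and> cone (snd k) (0,1) \<and> valid (fst k) \<and>
        int v + potf SeqB (0,1) (1,2) \<ge> 1 + potf SeqB (0,1) (snd k)"
    by (simp add: cone_def excB_def excC_def valid_def potf_def)
qed

lemma bA1: "dlt ((1,0), (0,0)) \<in> Gs (0,0) (potf SeqA (0,0)) (potf SeqA (1,2) (1,0))"
proof (rule G_from_rel[where T = "[(0, -1, ((0,0),(1,0)))]"])
  have "vec ((1,((1,0), (0,0))) # map (\<lambda>(c,k). (- c, k)) (tsum [(0, -1, ((0,0),(1,0)))])) = (vec [(1,((1,0),(0,0))), (1,((0,0),(1,0)))] :: bv \<times> bv \<Rightarrow> K)"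
    by (rule vec_eqI) (simp add: tsum_def algebra_simps power2_eq_square power3_eq_cube)
  then show "vec ((1,((1,0), (0,0))) # map (\<lambda>(c,k). (- c, k)) (tsum [(0, -1, ((0,0),(1,0)))])) \<in> Nsp"
    using A1 by simp
  show "\<forall>(v,u,k)\<in>set [(0, -1, ((0,0),(1,0)))]. u \<in> ringA \<and> cone (snd k) (0,0) \<and> valid (fst k) \<and>
        int v + potf SeqA (1,2) (1,0) \<ge> 1 + potf SeqA (0,0) (snd k)"
    by (simp add: cone_def excB_def excC_def valid_def potf_def)
qed

lemma bA2: "dlt ((1,1), (0,0)) \<in> Gs (0,0) (potf SeqA (0,0)) (potf SeqA (1,2) (1,1))"
proof (rule G_from_rel[where T = "[(2, -1, ((0,0),(1,1)))]"])
  have "vec ((1,((1,1), (0,0))) # map (\<lambda>(c,k). (- c, k)) (tsum [(2, -1, ((0,0),(1,1)))])) = (vec [(1,((1,1),(0,0))), (qq^2,((0,0),(1,1)))] :: bv \<times> bv \<Rightarrow> K)"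
    by (rule vec_eqI) (simp add: tsum_def algebra_simps power2_eq_square power3_eq_cube)
  then show "vec ((1,((1,1), (0,0))) # map (\<lambda>(c,k). (- c, k)) (tsum [(2, -1, ((0,0),(1,1)))])) \<in> Nsp"
    using A2 by simp
  show "\<forall>(v,u,k)\<in>set [(2, -1, ((0,0),(1,1)))]. u \<in> ringA \<and> cone (snd k) (0,0) \<and> valid (fst k) \<and>
        int v + potf SeqA (1,2) (1,1) \<ge> 1 + potf SeqA (0,0) (snd k)"
    by (simp add: cone_def excB_def excC_def valid_def potf_def)
qed

lemma bA3: "dlt ((2,2), (0,0)) \<in> Gs (0,0) (potf SeqA (0,0)) (potf SeqA (1,2) (2,2))"
proof (rule G_from_rel[where T = "[(4, -1, ((0,0),(2,2))), (1, -1, ((1,1),(1,1)))]"])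
  have "vec ((1,((2,2), (0,0))) # map (\<lambda>(c,k). (- c, k)) (tsum [(4, -1, ((0,0),(2,2))), (1, -1, ((1,1),(1,1)))])) = (vec [(1,((2,2),(0,0))), (qq^4,((0,0),(2,2))), (qq,((1,1),(1,1)))] :: bv \<times> bv \<Rightarrow> K)"
    by (rule vec_eqI) (simp add: tsum_def algebra_simps power2_eq_square power3_eq_cube)
  then show "vec ((1,((2,2), (0,0))) # map (\<lambda>(c,k). (- c, k)) (tsum [(4, -1, ((0,0),(2,2))), (1, -1, ((1,1),(1,1)))])) \<in> Nsp"
    using A3 by simp
  show "\<forall>(v,u,k)\<in>set [(4, -1, ((0,0),(2,2))), (1, -1, ((1,1),(1,1)))]. u \<in> ringA \<and> cone (snd k) (0,0) \<and> valid (fst k) \<and>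
        int v + potf SeqA (1,2) (2,2) \<ge> 1 + potf SeqA (0,0) (snd k)"
    by (simp add: cone_def excB_def excC_def valid_def potf_def)
qed

lemma bA4: "dlt ((1,0), (1,2)) \<in> Gs (1,2) (potf SeqA (1,2)) (potf SeqA (0,0) (1,0))"
proof (rule G_from_rel[where T = "[(1, -1, ((1,1),(1,1))), (4, -1, ((1,2),(1,0)))]"])
  have "vec ((1,((1,0), (1,2))) # map (\<lambda>(c,k). (- c, k)) (tsum [(1, -1, ((1,1),(1,1))), (4, -1, ((1,2),(1,0)))])) = (vec [(1,((1,0),(1,2))), (qq,((1,1),(1,1))), (qq^4,((1,2),(1,0)))] :: bv \<times> bv \<Rightarrow> K)"
    by (rule vec_eqI) (simp add: tsum_def algebra_simps power2_eq_square power3_eq_cube)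
  then show "vec ((1,((1,0), (1,2))) # map (\<lambda>(c,k). (- c, k)) (tsum [(1, -1, ((1,1),(1,1))), (4, -1, ((1,2),(1,0)))])) \<in> Nsp"
    using A4 by simp
  show "\<forall>(v,u,k)\<in>set [(1, -1, ((1,1),(1,1))), (4, -1, ((1,2),(1,0)))]. u \<in> ringA \<and> cone (snd k) (1,2) \<and> valid (fst k) \<and>
        int v + potf SeqA (0,0) (1,0) \<ge> 1 + potf SeqA (1,2) (snd k)"
    by (simp add: cone_def excB_def excC_def valid_def potf_def)
qed

lemma bA5: "dlt ((1,1), (1,2)) \<in> Gs (1,2) (potf SeqA (1,2)) (potf SeqA (0,0) (1,1))"
proof (rule G_from_rel[where T = "[(2, -1, ((1,2),(1,1)))]"])
  have "vec ((1,((1,1), (1,2))) # map (\<lambda>(c,k). (- c, k)) (tsum [(2, -1, ((1,2),(1,1)))])) = (vec [(1,((1,1),(1,2))), (qq^2,((1,2),(1,1)))] :: bv \<times> bv \<Rightarrow> K)"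
    by (rule vec_eqI) (simp add: tsum_def algebra_simps power2_eq_square power3_eq_cube)
  then show "vec ((1,((1,1), (1,2))) # map (\<lambda>(c,k). (- c, k)) (tsum [(2, -1, ((1,2),(1,1)))])) \<in> Nsp"
    using A5 by simp
  show "\<forall>(v,u,k)\<in>set [(2, -1, ((1,2),(1,1)))]. u \<in> ringA \<and> cone (snd k) (1,2) \<and> valid (fst k) \<and>
        int v + potf SeqA (0,0) (1,1) \<ge> 1 + potf SeqA (1,2) (snd k)"
    by (simp add: cone_def excB_def excC_def valid_def potf_def)
qed

lemma bA6: "dlt ((2,2), (1,2)) \<in> Gs (1,2) (potf SeqA (1,2)) (potf SeqA (0,0) (2,2))"
proof (rule G_from_rel[where T = "[(0, -1, ((1,2),(2,2)))]"])
  have "vec ((1,((2,2), (1,2))) # map (\<lambda>(c,k). (- c, k)) (tsum [(0, -1, ((1,2),(2,2)))])) = (vec [(1,((2,2),(1,2))), (1,((1,2),(2,2)))] :: bv \<times> bv \<Rightarrow> K)"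
    by (rule vec_eqI) (simp add: tsum_def algebra_simps power2_eq_square power3_eq_cube)
  then show "vec ((1,((2,2), (1,2))) # map (\<lambda>(c,k). (- c, k)) (tsum [(0, -1, ((1,2),(2,2)))])) \<in> Nsp"
    using A6 by simp
  show "\<forall>(v,u,k)\<in>set [(0, -1, ((1,2),(2,2)))]. u \<in> ringA \<and> cone (snd k) (1,2) \<and> valid (fst k) \<and>
        int v + potf SeqA (0,0) (2,2) \<ge> 1 + potf SeqA (1,2) (snd k)"
    by (simp add: cone_def excB_def excC_def valid_def potf_def)
qed

lemma cone_iff: "cone (b,j) (b0,j0) \<longleftrightarrow> j \<le> 2 \<and> b - b0 \<ge> 0 \<and> b - b0 + int j0 - int j \<ge> 0
   \<and> \<not> (b - b0 = 0 \<and> b - b0 + int j0 - int j = 0)"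
  by (simp add: cone_def excB_def excC_def valid_def)

lemma zsh1: "zsh 1 (b - 1, j) = (b, j)" by (simp add: zsh_def)

lemma relB: "cone w (0,1) \<Longrightarrow> dlt (w,(0,1)) \<in> Gs (0,1) (potf SeqB (0,1)) (potf SeqB (0,1) w)"
proof (induction "nat (fst w)" arbitrary: w rule: less_induct)
  case less
  obtain b j where w: "w = (b,j)" by force
  have c: "j \<le> 2" "b \<ge> 0" "b + 1 - int j \<ge> 0" "\<not> (b = 0 \<and> b + 1 - int j = 0)"
    using less.prems by (auto simp: w cone_iff)
  have j: "j = 0 \<or> j = 1 \<or> j = 2" using c(1) by auto
  consider "b = 0" | "b = 1" | "b \<ge> 2" using c(2) by linarith
  then show ?case
  proof cases
    case 1 then have "j = 0" using c j by auto
    then show ?thesis using bB0 1 w by simp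
  next
    case 2 then show ?thesis using j bB1 bB2 bB3 w by auto
  next
    case 3
    let ?wp = "(b - 1, j)"
    have cp: "cone ?wp (0,1)" using 3 c by (simp add: cone_iff)
    have "nat (fst ?wp) < nat (fst w)" using 3 w by simp
    then have ih: "dlt (?wp,(0,1)) \<in> Gs (0,1) (potf SeqB (0,1)) (potf SeqB (0,1) ?wp)"
      using less.hyps cp by blast
    have "dlt (zsh 1 ?wp, (0,1)) \<in> Gs (0,1) (potf SeqB (0,1)) (potf SeqB (0,1) ?wp + dd SeqB)"
      using ih potf_shift[of SeqB "(0,1)"] 3 c
      by (intro rel_step) (auto simp: dd_def cone_iff valid_def zsh_def potf_def excB_def excC_def)
    then show ?thesis using potf_shift[of SeqB "(0,1)" ?wp] by (simp add: w zsh1)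
  qed
qed

lemma relA1: "cone w (1,2) \<Longrightarrow> dlt (w,(0,0)) \<in> Gs (0,0) (potf SeqA (0,0)) (potf SeqA (1,2) w)"
proof (induction "nat (fst w)" arbitrary: w rule: less_induct)
  case less
  obtain b j where w: "w = (b,j)" by force
  have c: "j \<le> 2" "b - 1 \<ge> 0" "b + 1 - int j \<ge> 0" "\<not> (b - 1 = 0 \<and> b + 1 - int j = 0)"
    using less.prems by (auto simp: w cone_iff)
  have j: "j = 0 \<or> j = 1 \<or> j = 2" using c(1) by auto
  consider "b = 1" | "b = 2 \<and> j = 2" | "b = 2 \<and> j \<le> 1" | "b \<ge> 3" using c by linarith
  then show ?case
  proof cases
    case 1 then have "j = 0 \<or> j = 1" using c j by auto
    then show ?thesis using bA1 bA2 1 w by auto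
  next
    case 2 then show ?thesis using bA3 w by auto
  next
    case 3
    let ?wp = "(b - 1, j)"
    have cp: "cone ?wp (1,2)" using 3 c by (simp add: cone_iff)
    have "nat (fst ?wp) < nat (fst w)" using 3 w by simp
    then have ih: "dlt (?wp,(0,0)) \<in> Gs (0,0) (potf SeqA (0,0)) (potf SeqA (1,2) ?wp)"
      using less.hyps cp by blast
    have "dlt (zsh 1 ?wp, (0,0)) \<in> Gs (0,0) (potf SeqA (0,0)) (potf SeqA (1,2) ?wp + dd SeqA)"
      using ih potf_shift[of SeqA "(0,0)"] 3 c
      by (intro rel_step) (auto simp: dd_def cone_iff valid_def zsh_def potf_def excB_def excC_def)
    then show ?thesis using potf_shift[of SeqA "(1,2)" ?wp] by (simp add: w zsh1)
  next
    case 4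
    let ?wp = "(b - 1, j)"
    have cp: "cone ?wp (1,2)" using 4 c by (simp add: cone_iff)
    have "nat (fst ?wp) < nat (fst w)" using 4 w by simp
    then have ih: "dlt (?wp,(0,0)) \<in> Gs (0,0) (potf SeqA (0,0)) (potf SeqA (1,2) ?wp)"
      using less.hyps cp by blast
    have "dlt (zsh 1 ?wp, (0,0)) \<in> Gs (0,0) (potf SeqA (0,0)) (potf SeqA (1,2) ?wp + dd SeqA)"
      using ih potf_shift[of SeqA "(0,0)"] 4 c
      by (intro rel_step) (auto simp: dd_def cone_iff valid_def zsh_def potf_def excB_def excC_def)
    then show ?thesis using potf_shift[of SeqA "(1,2)" ?wp] by (simp add: w zsh1)
  qed
qed

lemma relA2: "cone w (0,0) \<Longrightarrow> dlt (w,(1,2)) \<in> Gs (1,2) (potf SeqA (1,2)) (potf SeqA (0,0) w)"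
proof (induction "nat (fst w)" arbitrary: w rule: less_induct)
  case less
  obtain b j where w: "w = (b,j)" by force
  have c: "j \<le> 2" "b \<ge> 0" "b - int j \<ge> 0" "\<not> (b = 0 \<and> b - int j = 0)"
    using less.prems by (auto simp: w cone_iff)
  have j: "j = 0 \<or> j = 1 \<or> j = 2" using c(1) by auto
  consider "b = 1" | "b = 2 \<and> j = 2" | "b = 2 \<and> j \<le> 1" | "b \<ge> 3" using c by linarith
  then show ?case
  proof cases
    case 1 then have "j = 0 \<or> j = 1" using c j by auto
    then show ?thesis using bA4 bA5 1 w by auto
  next
    case 2 then show ?thesis using bA6 w by auto
  next
    case 3
    let ?wp = "(b - 1, j)"
    have cp: "cone ?wp (0,0)" using 3 c by (simp add: cone_iff)
    have "nat (fst ?wp) < nat (fst w)" using 3 w by simp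
    then have ih: "dlt (?wp,(1,2)) \<in> Gs (1,2) (potf SeqA (1,2)) (potf SeqA (0,0) ?wp)"
      using less.hyps cp by blast
    have "dlt (zsh 1 ?wp, (1,2)) \<in> Gs (1,2) (potf SeqA (1,2)) (potf SeqA (0,0) ?wp + dd SeqA)"
      using ih potf_shift[of SeqA "(1,2)"] 3 c
      by (intro rel_step) (auto simp: dd_def cone_iff valid_def zsh_def potf_def excB_def excC_def)
    then show ?thesis using potf_shift[of SeqA "(0,0)" ?wp] by (simp add: w zsh1)
  next
    case 4
    let ?wp = "(b - 1, j)"
    have cp: "cone ?wp (0,0)" using 4 c by (simp add: cone_iff)
    have "nat (fst ?wp) < nat (fst w)" using 4 w by simp
    then have ih: "dlt (?wp,(1,2)) \<in> Gs (1,2) (potf SeqA (1,2)) (potf SeqA (0,0) ?wp)"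
      using less.hyps cp by blast
    have "dlt (zsh 1 ?wp, (1,2)) \<in> Gs (1,2) (potf SeqA (1,2)) (potf SeqA (0,0) ?wp + dd SeqA)"
      using ih potf_shift[of SeqA "(1,2)"] 4 c
      by (intro rel_step) (auto simp: dd_def cone_iff valid_def zsh_def potf_def excB_def excC_def)
    then show ?thesis using potf_shift[of SeqA "(0,0)" ?wp] by (simp add: w zsh1)
  qed
qed

lemma aspan_add2: "h \<in> aspan S \<Longrightarrow> f \<in> aspan S \<Longrightarrow> (\<lambda>x. f x + h x) \<in> aspan S"
proof (induction rule: aspan.induct)
  case aspan_zero then show ?case by simp
next
  case (aspan_add f' g c)
  have "(\<lambda>x. f x + (f' x + c * g x)) = (\<lambda>x. (f x + f' x) + c * g x)" by (simp add: algebra_simps)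
  then show ?case using aspan_add by (simp add: aspan.aspan_add)
qed

lemma aspan_smul: "f \<in> aspan S \<Longrightarrow> c \<in> ringA \<Longrightarrow> (\<lambda>x. c * f x) \<in> aspan S"
proof (induction rule: aspan.induct)
  case aspan_zero then show ?case by (simp add: aspan.aspan_zero)
next
  case (aspan_add f' g c')
  have "(\<lambda>x. c * (f' x + c' * g x)) = (\<lambda>x. c * f' x + (c * c') * g x)" by (simp add: algebra_simps)
  then show ?case using aspan_add by (simp add: aspan.aspan_add)
qed

lemma aspan_gen: "g \<in> S \<Longrightarrow> c \<in> ringA \<Longrightarrow> (\<lambda>x. c * g x) \<in> aspan S"
  using aspan.aspan_add[OF aspan.aspan_zero, of g S c] by simp

lemma kspan_add2: "h \<in> kspan S \<Longrightarrow> f \<in> kspan S \<Longrightarrow> (\<lambda>x. f x + h x) \<in> kspan S"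
proof (induction rule: kspan.induct)
  case kspan_zero then show ?case by simp
next
  case (kspan_add f' g c)
  have "(\<lambda>x. f x + (f' x + c * g x)) = (\<lambda>x. (f x + f' x) + c * g x)" by (simp add: algebra_simps)
  then show ?case using kspan_add by (simp add: kspan.kspan_add)
qed

lemma kspan_smul: "f \<in> kspan S \<Longrightarrow> (\<lambda>x. c * f x) \<in> kspan S"
proof (induction rule: kspan.induct)
  case kspan_zero then show ?case by (simp add: kspan.kspan_zero)
next
  case (kspan_add f' g c')
  have "(\<lambda>x. c * (f' x + c' * g x)) = (\<lambda>x. c * f' x + (c * c') * g x)" by (simp add: algebra_simps)
  then show ?case using kspan_add by (simp add: kspan.kspan_add)
qed

lemma kspan_gen: "g \<in> S \<Longrightarrow> g \<in> kspan S"
  using kspan.kspan_add[OF kspan.kspan_zero, of g S 1] by simp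

section \<open>The lattice condition\<close>

lemma good_zero: "in_qL_wedge R n (\<lambda>_. 0)"
  unfolding in_qL_wedge_def
  by (rule exI[of _ "\<lambda>_. 0"], rule exI[of _ "\<lambda>_. 0"]) (simp add: NR_def aspan.aspan_zero kspan.kspan_zero)

lemma good_add: "in_qL_wedge R n x \<Longrightarrow> in_qL_wedge R n y \<Longrightarrow> in_qL_wedge R n (vadd x y)"
proof -
  assume "in_qL_wedge R n x" "in_qL_wedge R n y"
  then obtain l k l' k' where h: "l \<in> aspan {dlt u |u. length u = R \<and> list_all valid u}" "k \<in> NR R"
    "x = (\<lambda>y. qq ^ n * l y + k y)"
    "l' \<in> aspan {dlt u |u. length u = R \<and> list_all valid u}" "k' \<in> NR R"
    "y = (\<lambda>y. qq ^ n * l' y + k' y)"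
    unfolding in_qL_wedge_def by blast
  have "(\<lambda>z. l z + l' z) \<in> aspan {dlt u |u. length u = R \<and> list_all valid u}" using h by (simp add: aspan_add2)
  moreover have "(\<lambda>z. k z + k' z) \<in> NR R" using h unfolding NR_def by (simp add: kspan_add2)
  moreover have "vadd x y = (\<lambda>z. qq ^ n * (l z + l' z) + (k z + k' z))"
    using h by (simp add: vadd_def fun_eq_iff algebra_simps)
  ultimately show ?thesis unfolding in_qL_wedge_def by blast
qed

lemma good_scale: "in_qL_wedge R n x \<Longrightarrow> c \<in> ringA \<Longrightarrow> in_qL_wedge R (n + v) (\<lambda>y. qq ^ v * c * x y)"
proof -
  assume "in_qL_wedge R n x" and c: "c \<in> ringA"
  then obtain l k where h: "l \<in> aspan {dlt u |u. length u = R \<and> list_all valid u}" "k \<in> NR R"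
    "x = (\<lambda>y. qq ^ n * l y + k y)"
    unfolding in_qL_wedge_def by blast
  have "(\<lambda>z. c * l z) \<in> aspan {dlt u |u. length u = R \<and> list_all valid u}" using h c by (simp add: aspan_smul)
  moreover have "(\<lambda>z. (qq ^ v * c) * k z) \<in> NR R" using h(2) unfolding NR_def by (rule kspan_smul)
  moreover have "(\<lambda>y. qq ^ v * c * x y) = (\<lambda>z. qq ^ (n + v) * (c * l z) + (qq ^ v * c) * k z)"
    using h by (simp add: fun_eq_iff algebra_simps power_add)
  ultimately show ?thesis unfolding in_qL_wedge_def by blast
qed

lemma good_N: "k \<in> NR R \<Longrightarrow> in_qL_wedge R n k"
  unfolding in_qL_wedge_def
  by (rule exI[of _ "\<lambda>_. 0"], rule exI[of _ k]) (simp add: aspan.aspan_zero)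

lemma good_basis:
  assumes "length u = R" "list_all valid u" "n \<le> v" "c \<in> ringA"
  shows "in_qL_wedge R n (\<lambda>y. qq ^ v * c * dlt u y)"
proof -
  have "(\<lambda>z. (qq ^ (v - n) * c) * dlt u z) \<in> aspan {dlt u |u. length u = R \<and> list_all valid u}"
    using assms by (intro aspan_gen) auto
  moreover have "(\<lambda>y. qq ^ v * c * dlt u y) = (\<lambda>z. qq ^ n * ((qq ^ (v - n) * c) * dlt u z) + 0)"
    using assms(3) by (simp add: fun_eq_iff algebra_simps power_add[symmetric])
  ultimately show ?thesis unfolding in_qL_wedge_def using kspan.kspan_zero[of "{ins u n w |u n w. n \<in> Nsp \<and> list_all valid u \<and> list_all valid w \<and> length u + 2 + length w = R}"]
    unfolding NR_def by blast
qed

lemma good_sum: "(\<And>s. s < (S::nat) \<Longrightarrow> in_qL_wedge R n (F s)) \<Longrightarrow> in_qL_wedge R n (\<lambda>y. \<Sum>s<S. F s y)"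
proof (induction S)
  case 0 then show ?case by (simp add: good_zero)
next
  case (Suc S)
  have "(\<lambda>y. \<Sum>s<Suc S. F s y) = vadd (\<lambda>y. \<Sum>s<S. F s y) (F S)"
    by (simp add: vadd_def fun_eq_iff)
  then show ?case using Suc good_add by simp
qed

lemma list_eq_split:
  "(y = u @ a # b # w) \<longleftrightarrow> (length y = length u + 2 + length w \<and> take (length u) y = u \<and>
      drop (length u + 2) y = w \<and> y ! length u = a \<and> y ! Suc (length u) = b)"
proof
  assume "y = u @ a # b # w" then show "length y = length u + 2 + length w \<and> take (length u) y = u \<and>
      drop (length u + 2) y = w \<and> y ! length u = a \<and> y ! Suc (length u) = b"
    by (simp add: nth_append)
next
  assume h: "length y = length u + 2 + length w \<and> take (length u) y = u \<and>
      drop (length u + 2) y = w \<and> y ! length u = a \<and> y ! Suc (length u) = b"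
  have l1: "length u < length y" "Suc (length u) < length y" using h by auto
  have "drop (length u) y = y ! length u # drop (Suc (length u)) y"
    using l1 by (simp add: Cons_nth_drop_Suc)
  also have "drop (Suc (length u)) y = y ! Suc (length u) # drop (Suc (Suc (length u))) y"
    using l1 by (simp add: Cons_nth_drop_Suc)
  finally have "drop (length u) y = a # b # w" using h by simp
  then show "y = u @ a # b # w" using h by (metis append_take_drop_id)
qed

lemma ins_dlt: "ins u (dlt (a,b)) w = dlt (u @ a # b # w)"
proof (rule ext)
  fix y
  show "ins u (dlt (a,b)) w y = dlt (u @ a # b # w) y"
    unfolding ins_def dlt_def using list_eq_split[of y u a b w] by auto
qed

lemma ins_smul: "ins u (\<lambda>p. c * f p) w = (\<lambda>y. c * ins u f w y)"
  by (rule ext) (simp add: ins_def)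

lemma ins_vadd: "ins u (vadd f h) w = vadd (ins u f w) (ins u h w)"
  by (rule ext) (simp add: ins_def vadd_def)

lemma ins_N: "f \<in> Nsp \<Longrightarrow> list_all valid u \<Longrightarrow> list_all valid w \<Longrightarrow> ins u f w \<in> NR (length u + 2 + length w)"
  unfolding NR_def by (rule kspan_gen) blast

section \<open>From relations to the lattice\<close>

lemma G_good:
  assumes "f \<in> Gs gp P E"
    and IH: "\<And>u w' n'. list_all valid u \<Longrightarrow> cone w' gp \<Longrightarrow> int n' + P w' \<le> int k \<Longrightarrow>
          in_qL_wedge (length u + 1 + k) n' (dlt (u @ w' # tls))"
    and tls: "length tls = k" "list_all valid tls"
  shows "list_all valid u \<Longrightarrow> int n + E \<le> int k + 1 \<Longrightarrow> in_qL_wedge (length u + 2 + k) n (ins u f tls)"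
  using assms(1)
proof (induction arbitrary: u n rule: Gs.induct)
  case (G_N f)
  then show ?case using ins_N[OF G_N.hyps G_N.prems(1) tls(2)] tls(1) good_N by simp
next
  case (G_t u0 w' x v)
  have e: "ins u (\<lambda>p. qq ^ v * u0 * dlt (x, w') p) tls = (\<lambda>y. qq ^ v * u0 * dlt (u @ x # w' # tls) y)"
    by (simp add: ins_smul ins_dlt)
  have vw: "valid w'" using G_t.hyps(2) by (simp add: cone_def)
  show ?case
  proof (cases "n \<le> v")
    case True
    show ?thesis unfolding e
      by (rule good_basis) (use True G_t tls vw in auto)
  next
    case False
    have i: "int (n - v) + P w' \<le> int k" using False G_t.hyps(4) G_t.prems(2) by linarith
    have vu: "list_all valid (u @ [x])" using G_t.prems(1) G_t.hyps(3) by simp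
    have "in_qL_wedge (length (u @ [x]) + 1 + k) (n - v) (dlt ((u @ [x]) @ w' # tls))"
      by (rule IH[OF vu G_t.hyps(2) i])
    then have "in_qL_wedge (length u + 2 + k) (n - v + v) (\<lambda>y. qq ^ v * u0 * dlt (u @ x # w' # tls) y)"
      using good_scale[OF _ G_t.hyps(1), of _ _ _ v] by simp
    then show ?thesis unfolding e using False by simp
  qed
next
  case (G_add f h)
  then show ?case by (simp add: ins_vadd good_add)
qed

definition GS :: "gseq \<Rightarrow> int \<Rightarrow> nat \<Rightarrow> bv" where "GS g m i = gs g (m + int i)"

lemma gs_valid: "valid (gs g x)"
  by (cases g) (simp_all add: gs_def valid_def)

lemma GS_cases:
  "(g = SeqB \<and> GS g m i = (0,1) \<and> GS g m (Suc i) = (0,1)) \<or>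
   (g = SeqA \<and> GS g m i = (1,2) \<and> GS g m (Suc i) = (0,0)) \<or>
   (g = SeqA \<and> GS g m i = (0,0) \<and> GS g m (Suc i) = (1,2))"
proof (cases g)
  case SeqA
  show ?thesis
  proof (cases "even (m + int i)")
    case True
    then have "odd (m + int (Suc i))" by simp
    then show ?thesis using True SeqA by (simp add: GS_def gs_def)
  next
    case False
    then have "even (m + int (Suc i))" by simp
    then show ?thesis using False SeqA by (simp add: GS_def gs_def)
  qed
next
  case SeqB then show ?thesis by (simp add: GS_def gs_def)
qed

lemma rel_all: "cone w (GS g m i) \<Longrightarrow>
  dlt (w, GS g m (Suc i)) \<in> Gs (GS g m (Suc i)) (potf g (GS g m (Suc i))) (potf g (GS g m i) w)"
proof -
  assume c: "cone w (GS g m i)"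
  from GS_cases[of g m i] show ?thesis
  proof (elim disjE conjE)
    assume h: "g = SeqB" "GS g m i = (0,1)" "GS g m (Suc i) = (0,1)"
    have cw: "cone w (0,1)" using c unfolding h(2) .
    have h2: "GS SeqB m i = (0,1)" "GS SeqB m (Suc i) = (0,1)" using h by auto
    show ?thesis unfolding h(1) h2 using relB[OF cw] .
  next
    assume h: "g = SeqA" "GS g m i = (1,2)" "GS g m (Suc i) = (0,0)"
    have cw: "cone w (1,2)" using c unfolding h(2) .
    have h2: "GS SeqA m i = (1,2)" "GS SeqA m (Suc i) = (0,0)" using h by auto
    show ?thesis unfolding h(1) h2 using relA1[OF cw] .
  next
    assume h: "g = SeqA" "GS g m i = (0,0)" "GS g m (Suc i) = (1,2)"
    have cw: "cone w (0,0)" using c unfolding h(2) .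
    have h2: "GS SeqA m i = (0,0)" "GS SeqA m (Suc i) = (1,2)" using h by auto
    show ?thesis unfolding h(1) h2 using relA2[OF cw] .
  qed
qed

lemma pot_pos: "cone w (GS g m i) \<Longrightarrow> potf g (GS g m i) w \<ge> 1"
proof -
  assume c: "cone w (GS g m i)"
  obtain b j where w: "w = (b,j)" by force
  show ?thesis using GS_cases[of g m i] c
    by (auto simp: w cone_iff potf_def excB_def excC_def)
qed

lemma main_good:
  "\<forall>i u w n. list_all valid u \<longrightarrow> cone w (GS g m i) \<longrightarrow> int n + potf g (GS g m i) w \<le> int k \<longrightarrow>
     in_qL_wedge (length u + 1 + k) n (dlt (u @ w # map (GS g m) [Suc i..<Suc i + k]))"
proof (induction k)
  case 0
  show ?case using pot_pos by fastforce
next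
  case (Suc k)
  show ?case
  proof (intro allI impI)
    fix i u w n
    assume vu: "list_all valid u" and cw: "cone w (GS g m i)"
      and le: "int n + potf g (GS g m i) w \<le> int (Suc k)"
    let ?tl = "map (GS g m) [Suc (Suc i)..<Suc (Suc i) + k]"
    have "[Suc i..<Suc i + Suc k] = Suc i # [Suc (Suc i)..<Suc (Suc i) + k]"
      by (simp add: upt_conv_Cons)
    then have split: "map (GS g m) [Suc i..<Suc i + Suc k] = GS g m (Suc i) # ?tl"
      by (simp only: list.map)
    have tlv: "list_all valid ?tl" by (simp add: list_all_iff GS_def gs_valid)
    have tll: "length ?tl = k" by (simp only: length_map length_upt add_diff_cancel_left')
    have IH: "\<And>u w' n'. list_all valid u \<Longrightarrow> cone w' (GS g m (Suc i)) \<Longrightarrow>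
        int n' + potf g (GS g m (Suc i)) w' \<le> int k \<Longrightarrow>
        in_qL_wedge (length u + 1 + k) n' (dlt (u @ w' # ?tl))"
      using Suc.IH by blast
    have le2: "int n + potf g (GS g m i) w \<le> int k + 1" using le by simp
    have "in_qL_wedge (length u + 2 + k) n (ins u (dlt (w, GS g m (Suc i))) ?tl)"
      using G_good[OF rel_all[OF cw] IH tll tlv vu le2] .
    moreover have eqlen: "length u + 1 + Suc k = length u + 2 + k" by simp
    ultimately show "in_qL_wedge (length u + 1 + Suc k) n
        (dlt (u @ w # map (GS g m) [Suc i..<Suc i + Suc k]))"
      by (simp only: split eqlen ins_dlt)
  qed
qed

section \<open>The inductive system\<close>

lemma ext_comp: "R0 \<le> R1 \<Longrightarrow> R1 \<le> R2 \<Longrightarrow> ext g m R1 R2 (ext g m R0 R1 x) = ext g m R0 R2 x"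
proof (rule ext)
  fix y assume r: "R0 \<le> R1" "R1 \<le> R2"
  show "ext g m R1 R2 (ext g m R0 R1 x) y = ext g m R0 R2 x y"
  proof (cases "length y = R2")
    case True
    have a: "(\<forall>i\<in>{R0..<R1}. take R1 y ! i = gs g (m + int i)) = (\<forall>i\<in>{R0..<R1}. y ! i = gs g (m + int i))"
      by auto
    have b: "take R0 (take R1 y) = take R0 y" using r by (simp add: min_def)
    have c: "(\<forall>i\<in>{R1..<R2}. y ! i = gs g (m + int i)) \<and> (\<forall>i\<in>{R0..<R1}. y ! i = gs g (m + int i))
       \<longleftrightarrow> (\<forall>i\<in>{R0..<R2}. y ! i = gs g (m + int i))"
      using r by auto
    show ?thesis using True r a b c by (auto simp: ext_def)
  next
    case False then show ?thesis by (simp add: ext_def)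
  qed
qed

lemma ext_vadd: "ext g m R R' (vadd f h) = vadd (ext g m R R' f) (ext g m R R' h)"
  by (rule ext) (simp add: ext_def vadd_def)

lemma ext_zero: "ext g m R R' (\<lambda>_. 0) = (\<lambda>_. 0)"
  by (rule ext) (simp add: ext_def)

lemma ext_dlt:
  assumes "length v = R" "R \<le> R'"
  shows "ext g m R R' (dlt v) = dlt (v @ map (GS g m) [R..<R'])"
proof (rule ext)
  fix y
  have "(length y = R' \<and> (\<forall>i\<in>{R..<R'}. y ! i = gs g (m + int i)) \<and> take R y = v) \<longleftrightarrow>
        y = v @ map (GS g m) [R..<R']"
  proof
    assume h: "length y = R' \<and> (\<forall>i\<in>{R..<R'}. y ! i = gs g (m + int i)) \<and> take R y = v"
    have "drop R y = map (GS g m) [R..<R']"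
    proof (rule nth_equalityI)
      show "length (drop R y) = length (map (GS g m) [R..<R'])" using h by simp
      fix k assume "k < length (drop R y)"
      then have k: "R + k < R'" using h by simp
      have "drop R y ! k = y ! (R + k)" using h k by simp
      also have "\<dots> = gs g (m + int (R + k))" using h k by auto
      also have "\<dots> = map (GS g m) [R..<R'] ! k" using k by (simp add: GS_def)
      finally show "drop R y ! k = map (GS g m) [R..<R'] ! k" .
    qed
    then show "y = v @ map (GS g m) [R..<R']" using h by (metis append_take_drop_id)
  next
    assume h: "y = v @ map (GS g m) [R..<R']"
    show "length y = R' \<and> (\<forall>i\<in>{R..<R'}. y ! i = gs g (m + int i)) \<and> take R y = v"
      using h assms by (auto simp: nth_append GS_def)
  qed
  then show "ext g m R R' (dlt v) y = dlt (v @ map (GS g m) [R..<R']) y"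
    unfolding ext_def dlt_def by (auto simp: assms)
qed

lemma fst_Bpartial: "fst (Bpartial g m a S) = S"
  by (induction S) (simp_all add: fbar_add_def Bterm_def)

lemma Bpartial_ext:
  "R' \<ge> S \<Longrightarrow> ext g m S R' (snd (Bpartial g m a S)) =
     (\<lambda>y. \<Sum>s<S. ext g m (Suc s) R' (snd (Bterm g m a s)) y)"
proof (induction S)
  case 0 then show ?case by (simp add: ext_zero)
next
  case (Suc S)
  have fb: "fst (Bterm g m a S) = Suc S" by (simp add: Bterm_def)
  have "snd (Bpartial g m a (Suc S)) =
     vadd (ext g m S (Suc S) (snd (Bpartial g m a S))) (ext g m (Suc S) (Suc S) (snd (Bterm g m a S)))"
    by (simp add: fbar_add_def fst_Bpartial fb)
  then have "ext g m (Suc S) R' (snd (Bpartial g m a (Suc S))) =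
     vadd (ext g m S R' (snd (Bpartial g m a S))) (ext g m (Suc S) R' (snd (Bterm g m a S)))"
    using Suc.prems by (simp add: ext_vadd ext_comp)
  then show ?case using Suc by (simp add: vadd_def fun_eq_iff)
qed

lemma Bterm_list:
  "map (\<lambda>i. if i = s then zsh a (gs g (m + int i)) else gs g (m + int i)) [0..<Suc s]
     = map (GS g m) [0..<s] @ [zsh a (GS g m s)]"
  by (simp add: GS_def)

theorem mainTheorem11:
  fixes g :: gseq and m :: int and a :: int
  assumes "a > 0"
  shows "F_tendsto_zero g m (Bpartial g m a)"
  unfolding F_tendsto_zero_def
proof (intro allI exI[of _ 0] impI)
  fix n S :: nat
  let ?R = "S + n + 2 * nat a"
  have hterm: "in_qL_wedge ?R n (ext g m (Suc s) ?R (snd (Bterm g m a s)))" if s: "s < S" for s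
  proof -
    let ?u = "map (GS g m) [0..<s]" and ?w = "zsh a (GS g m s)" and ?k = "?R - Suc s"
    have e1: "snd (Bterm g m a s) = dlt (?u @ [?w])"
      by (simp only: Bterm_def snd_conv Bterm_list)
    have e2: "ext g m (Suc s) ?R (dlt (?u @ [?w])) = dlt (?u @ ?w # map (GS g m) [Suc s..<Suc s + ?k])"
      using ext_dlt[of "?u @ [?w]" "Suc s" ?R g m] s by (simp add: add.assoc)
    have vu: "list_all valid ?u" by (simp add: list_all_iff GS_def gs_valid)
    have cw: "cone ?w (GS g m s)"
      using assms gs_valid[of g "m + int s"] by (auto simp: cone_def excB_def excC_def zsh_def GS_def valid_def)
    have pw: "potf g (GS g m s) ?w \<le> 2 * a"
      using assms by (cases g) (auto simp: potf_def excB_def excC_def zsh_def)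
    have le: "int n + potf g (GS g m s) ?w \<le> int ?k" using pw s assms by simp
    have "in_qL_wedge (length ?u + 1 + ?k) n (dlt (?u @ ?w # map (GS g m) [Suc s..<Suc s + ?k]))"
      using main_good[of g m ?k] vu cw le by blast
    moreover have "length ?u + 1 + ?k = ?R" using s by simp
    ultimately show ?thesis by (simp only: e1 e2)
  qed
  have ee: "ext g m S ?R (snd (Bpartial g m a S)) = (\<lambda>y. \<Sum>s<S. ext g m (Suc s) ?R (snd (Bterm g m a s)) y)"
    by (rule Bpartial_ext) simp
  have "in_qL_wedge ?R n (\<lambda>y. \<Sum>s<S. ext g m (Suc s) ?R (snd (Bterm g m a s)) y)"
    by (rule good_sum) (rule hterm)
  then have "in_qL_wedge ?R n (ext g m S ?R (snd (Bpartial g m a S)))" unfolding ee .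
  then show "in_qL_fbar g m n (Bpartial g m a S)"
    unfolding in_qL_fbar_def fst_Bpartial by (intro exI[of _ ?R]) simp
qed

end
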